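(* Let $M=\bigoplus_aB(H_a)$ and $N=\bigoplus_bB(K_b)$ be finite-dimensional algebras, $H=\bigoplus_aH_a$, and let $V\subseteq B(H)\otimes N^{op}$ be a symmetric decomposable quantum multi-relation. Then there exists a completely positive map $\Phi:M\to N$ such that $\tilde S_\Phi=V$, where $\tilde S_\Phi$ is the confusability multigraph of $\Phi$.
   Context: All Hilbert spaces are finite dimensional; inner products linear in the second variable; $\theta_{\xi,\eta}(\eta')=\langle\eta,\eta'\rangle\xi$. $M\subseteq B(H)$ and $N\subseteq B(K)$, $K=\bigoplus_bK_b$, act block-diagonally. $N^{op}$ is the opposite algebra (product $a*b=ba$), identified via $\pi_{op}(T)\overline\xi=\overline{T^*\xi}$ with $\bigoplus_bB(\overline{K_b})\subseteq B(\overline K)$. A quantum multi-relation on a pair $(M,N_0)$, $N_0\subseteq B(L)$, is a subspace $V\subseteq B(H)\otimes N_0$ which is an $(M'\otimes1)$–$(M'\otimes1)$ bimodule with $(1\otimes Z(N_0))V\subseteq V$; it is symmetric if $V^*=V$. For a single block $N_0=B(L)$, let $\sigma:B(\overline L,H)\otimes B(H,\overline L)\to B(H)\otimes B(L)$ be the linear isomorphism $\sigma(\theta_{\xi_1,\overline{\eta_1}}\otimes\theta_{\overline{\eta_2},\xi_2})=\theta_{\xi_1,\xi_2}\otimes\theta_{\eta_1,\eta_2}$; $V$ is decomposable if $V=\sigma(V_1\otimes V_2)$ for some subspaces $V_1\subseteq B(\overline L,H)$, $V_2\subseteq B(H,\overline L)$. For $N_0=\bigoplus_b B(L_b)$, $V$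 is decomposable if for each $b$ the compression $V_b=(\mathrm{id}\otimes j_b)(V)\subseteq B(H)\otimes B(L_b)$ is decomposable, where $j_b$ compresses to the $b$-th block; here this is applied with $N_0=N^{op}\cong\bigoplus_bB(\overline{K_b})$. Confusability multigraph of a CP map $\Phi:M\to N$: with $\{e^a_i\}$ an orthonormal basis of $H_a$ and $e^a_{ij}$ matrix units, let $C_\Phi=\sum_{i,j,a}e^a_{ij}\otimes\Phi(e^a_{ji})\in B(H)\otimes N^{op}\cong\mathcal{L}(\mathcal{M}_\Phi)$, where $\mathcal{M}_\Phi=H\otimes N^{op}$ is the right Hilbert $N^{op}$-module with $(\xi\otimes a)*x=\xi\otimes(a*x)$ and $\langle\xi\otimes a,\eta\otimes b\rangle=\langle\xi,\eta\rangle a^**b$. A Stinespring module is a pair $(\mathcal{E},W)$, $\mathcal{E}$ a Hilbert $N^{op}$-module and $W$ an adjointable module map $\mathcal{M}_\Phi\to\mathcal{E}$ with $W^*W=C_\Phi$; then $\tilde S_\Phi=W^*\mathcal{L}(\mathcal{E})W\subseteq B(H)\otimes N^{op}$ (independent of the choice). *)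

theory Defs
  imports Complex_Main "Jordan_Normal_Form.Matrix"
begin

text \<open>A list ns of block sizes describes
  M = (+)_a B(H_a) acting block-diagonally on H = C^d, d = sum ns;
  a list ms describes N = (+)_b B(K_b) acting on K = C^k, k = sum ms.
  Operators are complex matrices (Jordan_Normal_Form), H (x) K is C^(d*k)
  with index i*k+p, and the tensor product of operators is the Kronecker product.\<close>

type_synonym cmat = "complex mat"

definition tdim :: "nat list \<Rightarrow> nat" where "tdim ns = sum_list ns"

definition boff :: "nat list \<Rightarrow> nat \<Rightarrow> nat" where
  "boff ns a = sum_list (take a ns)"

definition blk :: "nat list \<Rightarrow> nat \<Rightarrow> nat" where
  "blk ns i = (LEAST a. i < sum_list (take (Suc a) ns))"

definition adj :: "cmat \<Rightarrow> cmat" where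
  "adj A = mat (dim_col A) (dim_row A) (\<lambda>(i,j). cnj (A $$ (j,i)))"

definition kron :: "cmat \<Rightarrow> cmat \<Rightarrow> cmat" where
  "kron A B = mat (dim_row A * dim_row B) (dim_col A * dim_col B)
     (\<lambda>(i,j). A $$ (i div dim_row B, j div dim_col B) * B $$ (i mod dim_row B, j mod dim_col B))"

definition munit :: "nat \<Rightarrow> nat \<Rightarrow> nat \<Rightarrow> nat \<Rightarrow> cmat" where
  "munit r c i j = mat r c (\<lambda>(p,q). if p = i \<and> q = j then 1 else 0)"

definition msum :: "nat \<Rightarrow> nat \<Rightarrow> ('x \<Rightarrow> cmat) \<Rightarrow> 'x set \<Rightarrow> cmat" where
  "msum r c f S = mat r c (\<lambda>ij. \<Sum>x\<in>S. f x $$ ij)"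

inductive_set mspan :: "nat \<Rightarrow> nat \<Rightarrow> cmat set \<Rightarrow> cmat set" for r c S where
  mspan_zero: "0\<^sub>m r c \<in> mspan r c S"
| mspan_base: "x \<in> S \<Longrightarrow> x \<in> mspan r c S"
| mspan_add: "x \<in> mspan r c S \<Longrightarrow> y \<in> mspan r c S \<Longrightarrow> x + y \<in> mspan r c S"
| mspan_smult: "x \<in> mspan r c S \<Longrightarrow> (a::complex) \<cdot>\<^sub>m x \<in> mspan r c S"

definition msubspace :: "nat \<Rightarrow> nat \<Rightarrow> cmat set \<Rightarrow> bool" where
  "msubspace r c V \<longleftrightarrow> V \<subseteq> carrier_mat r c \<and> 0\<^sub>m r c \<in> V \<and>
     (\<forall>x\<in>V. \<forall>y\<in>V. x + y \<in> V) \<and> (\<forall>x\<in>V. \<forall>a::complex. a \<cdot>\<^sub>m x \<in> V)"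

definition blockalg :: "nat list \<Rightarrow> cmat set" where
  "blockalg ns = {X \<in> carrier_mat (tdim ns) (tdim ns).
      \<forall>i < tdim ns. \<forall>j < tdim ns. blk ns i \<noteq> blk ns j \<longrightarrow> X $$ (i,j) = 0}"

definition commutant :: "nat \<Rightarrow> cmat set \<Rightarrow> cmat set" where
  "commutant n S = {X \<in> carrier_mat n n. \<forall>Y\<in>S. X * Y = Y * X}"

definition center :: "nat \<Rightarrow> cmat set \<Rightarrow> cmat set" where
  "center n S = S \<inter> commutant n S"

text \<open>N^op, realised via pi_op as an algebra on conj(K) = C^k: pi_op(T) = T^t
  (in the basis conj(e_p) of conj(K)); it is (+)_b B(conj(K_b)).\<close>
definition Nop :: "nat list \<Rightarrow> cmat set" where
  "Nop ms = transpose_mat ` blockalg ms"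

text \<open>algebraic tensor product B(C^c, C^r) (x) N^op inside B(C^c (x) conj K, C^r (x) conj K)\<close>
definition tensN :: "nat \<Rightarrow> nat \<Rightarrow> nat list \<Rightarrow> cmat set" where
  "tensN r c ms = mspan (r * tdim ms) (c * tdim ms)
      {kron X Y | X Y. X \<in> carrier_mat r c \<and> Y \<in> Nop ms}"

definition qmr :: "nat list \<Rightarrow> nat list \<Rightarrow> cmat set \<Rightarrow> bool" where
  "qmr ns ms V \<longleftrightarrow>
     (let d = tdim ns; k = tdim ms in
       msubspace (d*k) (d*k) V \<and> V \<subseteq> tensN d d ms \<and>
       (\<forall>A \<in> commutant d (blockalg ns). \<forall>v\<in>V.
           kron A (1\<^sub>m k) * v \<in> V \<and> v * kron A (1\<^sub>m k) \<in> V) \<and>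
       (\<forall>Z \<in> center k (Nop ms). \<forall>v\<in>V. kron (1\<^sub>m d) Z * v \<in> V))"

definition symmetric_qmr :: "cmat set \<Rightarrow> bool" where
  "symmetric_qmr V \<longleftrightarrow> adj ` V = V"

text \<open>compression (id (x) j_b): B(H) (x) N^op -> B(H) (x) B(conj K_b)\<close>
definition compress :: "nat list \<Rightarrow> nat list \<Rightarrow> nat \<Rightarrow> cmat \<Rightarrow> cmat" where
  "compress ns ms b v =
     (let d = tdim ns; k = tdim ms; l = ms ! b; ob = boff ms b in
       mat (d*l) (d*l) (\<lambda>(r,s). v $$ ((r div l) * k + ob + r mod l, (s div l) * k + ob + s mod l)))"

text \<open>sigma : B(conj L, H) (x) B(H, conj L) -> B(H) (x) B(L) on elementary tensors,
  in coordinates (H = C^d, L = C^l):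
  sigma(e_ip (x) e_qj) = e_ij (x) e_pq, i.e. sigma(x (x) y) has (i,j,p,q)-entry x_ip y_qj.\<close>
definition sigma :: "nat \<Rightarrow> nat \<Rightarrow> cmat \<Rightarrow> cmat \<Rightarrow> cmat" where
  "sigma d l x y = mat (d*l) (d*l)
     (\<lambda>(r,s). x $$ (r div l, r mod l) * y $$ (s mod l, s div l))"

definition decomposable_single :: "nat \<Rightarrow> nat \<Rightarrow> cmat set \<Rightarrow> bool" where
  "decomposable_single d l W \<longleftrightarrow>
     (\<exists>V1 V2. msubspace d l V1 \<and> msubspace l d V2 \<and>
        W = mspan (d*l) (d*l) {sigma d l x y | x y. x \<in> V1 \<and> y \<in> V2})"

definition decomposable :: "nat list \<Rightarrow> nat list \<Rightarrow> cmat set \<Rightarrow> bool" where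
  "decomposable ns ms V \<longleftrightarrow>
     (\<forall>b < length ms. decomposable_single (tdim ns) (ms ! b) (compress ns ms b ` V))"

definition positive :: "nat \<Rightarrow> cmat \<Rightarrow> bool" where
  "positive n X \<longleftrightarrow> X \<in> carrier_mat n n \<and>
     (\<forall>v \<in> carrier_vec n. let z = conjugate v \<bullet> (X *\<^sub>v v) in Im z = 0 \<and> 0 \<le> Re z)"

definition subblock :: "nat \<Rightarrow> cmat \<Rightarrow> nat \<Rightarrow> nat \<Rightarrow> cmat" where
  "subblock b Z s t = mat b b (\<lambda>(i,j). Z $$ (s*b + i, t*b + j))"

text \<open>amplification Phi (x) id_{M_n}\<close>
definition amplify :: "nat \<Rightarrow> nat \<Rightarrow> nat \<Rightarrow> (cmat \<Rightarrow> cmat) \<Rightarrow> cmat \<Rightarrow> cmat" where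
  "amplify d k n Phi Z = mat (n*k) (n*k)
     (\<lambda>(r,c). Phi (subblock d Z (r div k) (c div k)) $$ (r mod k, c mod k))"

definition cp_map :: "nat list \<Rightarrow> nat list \<Rightarrow> (cmat \<Rightarrow> cmat) \<Rightarrow> bool" where
  "cp_map ns ms Phi \<longleftrightarrow>
     (let d = tdim ns; k = tdim ms in
       (\<forall>X \<in> blockalg ns. Phi X \<in> blockalg ms) \<and>
       (\<forall>X \<in> blockalg ns. \<forall>Y \<in> blockalg ns. Phi (X + Y) = Phi X + Phi Y) \<and>
       (\<forall>X \<in> blockalg ns. \<forall>a::complex. Phi (a \<cdot>\<^sub>m X) = a \<cdot>\<^sub>m Phi X) \<and>
       (\<forall>n. \<forall>Z. Z \<in> carrier_mat (n*d) (n*d) \<and>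
             (\<forall>s<n. \<forall>t<n. subblock d Z s t \<in> blockalg ns) \<and> positive (n*d) Z
             \<longrightarrow> positive (n*k) (amplify d k n Phi Z)))"

text \<open>C_Phi = sum_{a,i,j} e^a_ij (x) Phi(e^a_ji), the second factor read in N^op (via pi_op)\<close>
definition CPhi :: "nat list \<Rightarrow> nat list \<Rightarrow> (cmat \<Rightarrow> cmat) \<Rightarrow> cmat" where
  "CPhi ns ms Phi =
     (let d = tdim ns; k = tdim ms in
       msum (d*k) (d*k)
         (\<lambda>(i,j). kron (munit d d i j) (transpose_mat (Phi (munit d d j i))))
         {(i,j). i < d \<and> j < d \<and> blk ns i = blk ns j})"

text \<open>Stinespring module (E, W) with E = C^m (x) N^op (a free Hilbert N^op-module);
  L(E) = B(C^m) (x) N^op and adjointable module maps M_Phi -> E are B(C^d,C^m) (x) N^op.\<close>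
definition stinespring :: "nat list \<Rightarrow> nat list \<Rightarrow> (cmat \<Rightarrow> cmat) \<Rightarrow> nat \<Rightarrow> cmat \<Rightarrow> bool" where
  "stinespring ns ms Phi m W \<longleftrightarrow>
     W \<in> tensN m (tdim ns) ms \<and> adj W * W = CPhi ns ms Phi"

definition tildeS :: "nat list \<Rightarrow> nat list \<Rightarrow> (cmat \<Rightarrow> cmat) \<Rightarrow> cmat set" where
  "tildeS ns ms Phi =
     (SOME S. \<exists>m W. stinespring ns ms Phi m W \<and>
        S = {adj W * Y * W | Y. Y \<in> tensN m m ms})"

end

theory Submission
  imports Defs "Jordan_Normal_Form.Determinant"
begin

lemma mspan_carrier: assumes "S \<subseteq> carrier_mat r c" "x \<in> mspan r c S" shows "x \<in> carrier_mat r c"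
  using assms(2,1) by (induction rule: mspan.induct) auto

lemma mspan_sub: assumes "msubspace r c W" "S \<subseteq> W" shows "mspan r c S \<subseteq> W"
proof
  fix x assume "x \<in> mspan r c S" then show "x \<in> W"
    using assms by (induction rule: mspan.induct) (auto simp: msubspace_def)
qed

lemma msubspace_mspan: "S \<subseteq> carrier_mat r c \<Longrightarrow> msubspace r c (mspan r c S)"
  unfolding msubspace_def using mspan_carrier by (auto intro: mspan.intros)

lemma mspan_mono: "S \<subseteq> T \<Longrightarrow> T \<subseteq> carrier_mat r c \<Longrightarrow> mspan r c S \<subseteq> mspan r c T"
  by (rule mspan_sub[OF msubspace_mspan]) (auto intro: mspan.intros)

lemma msum_empty: "msum r c g {} = 0\<^sub>m r c"
  unfolding msum_def by (rule eq_matI) auto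

lemma msum_insert: assumes "finite J" "j \<notin> J" "g j \<in> carrier_mat r c"
  shows "msum r c g (insert j J) = g j + msum r c g J"
  unfolding msum_def using assms by (intro eq_matI) auto

lemma msubspace_msum: assumes "msubspace r c W" "finite J" "\<And>j. j \<in> J \<Longrightarrow> g j \<in> W"
  shows "msum r c g J \<in> W"
  using assms(2,3)
proof (induction J rule: finite_induct)
  case empty then show ?case using assms(1) by (simp add: msum_empty msubspace_def)
next
  case (insert j J)
  have "g j \<in> carrier_mat r c" using insert assms(1) by (auto simp: msubspace_def)
  then show ?case using insert assms(1) by (simp add: msum_insert msubspace_def)
qed

lemma index_msum: "i < r \<Longrightarrow> j < c \<Longrightarrow> msum r c g J $$ (i,j) = (\<Sum>x\<in>J. g x $$ (i,j))"
  unfolding msum_def by simp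

lemma dim_msum[simp]: "dim_row (msum r c g J) = r" "dim_col (msum r c g J) = c"
  unfolding msum_def by simp_all

lemma msum_carrier[simp]: "msum r c g J \<in> carrier_mat r c"
  unfolding msum_def by simp

lemma sum_take_mono: "i \<le> j \<Longrightarrow> sum_list (take i (xs::nat list)) \<le> sum_list (take j xs)"
proof -
  assume "i \<le> j"
  then have "take j xs = take i xs @ take (j - i) (drop i xs)"
    by (metis le_add_diff_inverse take_add)
  then show ?thesis by simp
qed

lemma sum_take_Suc: "a < length xs \<Longrightarrow> sum_list (take (Suc a) (xs::nat list)) = sum_list (take a xs) + xs ! a"
  by (simp add: take_Suc_conv_app_nth)

lemma blk_boff: assumes "b < length ms" "p < ms ! b"
  shows "blk ms (boff ms b + p) = b"
  unfolding blk_def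
proof (rule Least_equality)
  show "boff ms b + p < sum_list (take (Suc b) ms)"
    using assms by (simp add: sum_take_Suc boff_def)
next
  fix a assume a: "boff ms b + p < sum_list (take (Suc a) ms)"
  show "b \<le> a"
  proof (rule ccontr)
    assume "\<not> b \<le> a"
    then have "sum_list (take (Suc a) ms) \<le> sum_list (take b ms)" by (intro sum_take_mono) auto
    then show False using a by (simp add: boff_def)
  qed
qed

lemma blk_range: assumes "t < tdim ms"
  shows "blk ms t < length ms" "boff ms (blk ms t) \<le> t" "t < boff ms (blk ms t) + ms ! (blk ms t)"
proof -
  let ?P = "\<lambda>a. t < sum_list (take (Suc a) ms)"
  have ex: "?P (length ms)" using assms by (simp add: tdim_def)
  have P0: "?P (blk ms t)" unfolding blk_def by (rule LeastI[of ?P, OF ex])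
  have min: "\<And>a. a < blk ms t \<Longrightarrow> \<not> ?P a" unfolding blk_def by (rule not_less_Least)
  show lt: "blk ms t < length ms"
  proof (rule ccontr)
    assume "\<not> blk ms t < length ms"
    then have "length ms \<le> blk ms t" by simp
    moreover have "length ms \<noteq> 0" using assms by (auto simp: tdim_def)
    ultimately have "length ms - 1 < blk ms t" by (cases ms) auto
    from min[OF this] have "\<not> t < sum_list (take (Suc (length ms - 1)) ms)" .
    moreover have "Suc (length ms - 1) = length ms" using \<open>length ms \<noteq> 0\<close> by simp
    ultimately show False using assms by (simp add: tdim_def)
  qed
  show "boff ms (blk ms t) \<le> t"
  proof (cases "blk ms t")
    case 0 then show ?thesis by (simp add: boff_def)
  next
    case (Suc a)
    then have "\<not> ?P a" using min by simp
    then show ?thesis using Suc by (simp add: boff_def)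
  qed
  show "t < boff ms (blk ms t) + ms ! (blk ms t)"
    using P0 lt by (simp add: sum_take_Suc boff_def)
qed

lemma boff_bound: assumes "b < length ms" shows "boff ms b + ms ! b \<le> tdim ms"
proof -
  have "boff ms b + ms ! b = sum_list (take (Suc b) ms)" using assms by (simp add: sum_take_Suc boff_def)
  also have "\<dots> \<le> sum_list (take (length ms) ms)" using assms by (intro sum_take_mono) auto
  finally show ?thesis by (simp add: tdim_def)
qed

lemma blk_eqI: assumes "b < length ms" "boff ms b \<le> t" "t < boff ms b + ms ! b"
  shows "blk ms t = b"
  using blk_boff[OF assms(1), of "t - boff ms b"] assms by simp

definition bd :: "nat list \<Rightarrow> nat \<Rightarrow> nat \<Rightarrow> cmat \<Rightarrow> bool" where
  "bd ms r c X \<longleftrightarrow> X \<in> carrier_mat (r * tdim ms) (c * tdim ms) \<and>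
     (\<forall>i < r * tdim ms. \<forall>j < c * tdim ms. blk ms (i mod tdim ms) \<noteq> blk ms (j mod tdim ms) \<longrightarrow> X $$ (i,j) = 0)"

lemma Nop_entry: assumes "Y \<in> Nop ms" "p < tdim ms" "q < tdim ms" "blk ms p \<noteq> blk ms q"
  shows "Y $$ (p,q) = 0"
proof -
  obtain Y0 where Y0: "Y0 \<in> blockalg ms" "Y = transpose_mat Y0" using assms(1) by (auto simp: Nop_def)
  then show ?thesis using assms by (auto simp: blockalg_def)
qed

lemma Nop_carrier: "Y \<in> Nop ms \<Longrightarrow> Y \<in> carrier_mat (tdim ms) (tdim ms)"
  by (auto simp: Nop_def blockalg_def)

lemma dim_munit[simp]: "dim_row (munit r c i j) = r" "dim_col (munit r c i j) = c"
  by (simp_all add: munit_def)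

lemma dim_kron[simp]: "dim_row (kron A B) = dim_row A * dim_row B" "dim_col (kron A B) = dim_col A * dim_col B"
  by (simp_all add: kron_def)

lemma munit_carrier[simp]: "munit r c i j \<in> carrier_mat r c"
  by (simp add: munit_def)

lemma munit_index[simp]: "p < r \<Longrightarrow> q < c \<Longrightarrow> munit r c i j $$ (p,q) = (if p = i \<and> q = j then 1 else 0)"
  by (simp add: munit_def)

lemma munit_Nop: assumes "p < tdim ms" "q < tdim ms" "blk ms p = blk ms q"
  shows "munit (tdim ms) (tdim ms) p q \<in> Nop ms"
proof -
  have "munit (tdim ms) (tdim ms) q p \<in> blockalg ms"
    using assms unfolding blockalg_def by auto
  moreover have "munit (tdim ms) (tdim ms) p q = transpose_mat (munit (tdim ms) (tdim ms) q p)"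
    by (rule eq_matI) auto
  ultimately show ?thesis unfolding Nop_def by blast
qed

lemma kron_carrier[simp]: "kron A B \<in> carrier_mat (dim_row A * dim_row B) (dim_col A * dim_col B)"
  by (simp add: kron_def)

lemma kron_index: "i < dim_row A * dim_row B \<Longrightarrow> j < dim_col A * dim_col B \<Longrightarrow>
  kron A B $$ (i,j) = A $$ (i div dim_row B, j div dim_col B) * B $$ (i mod dim_row B, j mod dim_col B)"
  by (simp add: kron_def)

lemma tensN_sub_bd: assumes "X \<in> tensN r c ms" shows "bd ms r c X"
  using assms unfolding tensN_def
proof (induction rule: mspan.induct)
  case mspan_zero then show ?case by (simp add: bd_def)
next
  case (mspan_base x)
  then obtain X Y where x: "x = kron X Y" and X: "X \<in> carrier_mat r c" and Y: "Y \<in> Nop ms" by auto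
  have Yc: "Y \<in> carrier_mat (tdim ms) (tdim ms)" using Nop_carrier[OF Y] .
  show ?case unfolding bd_def
  proof (intro conjI allI impI)
    show "x \<in> carrier_mat (r * tdim ms) (c * tdim ms)" using x X Yc kron_carrier[of X Y] by auto
    fix i j assume i: "i < r * tdim ms" and j: "j < c * tdim ms" and b: "blk ms (i mod tdim ms) \<noteq> blk ms (j mod tdim ms)"
    have k: "0 < tdim ms" using i by (cases "tdim ms") auto
    have "Y $$ (i mod tdim ms, j mod tdim ms) = 0" using Nop_entry[OF Y _ _ b] k by auto
    then show "x $$ (i,j) = 0" using x X Yc i j by (simp add: kron_index)
  qed
next
  case (mspan_add x y)
  then show ?case by (auto simp: bd_def)
next
  case (mspan_smult x a)
  then show ?case by (auto simp: bd_def)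
qed

lemma bd_sub_tensN: assumes "bd ms r c X" shows "X \<in> tensN r c ms"
proof -
  let ?k = "tdim ms"
  define J where "J = {ij. fst ij < r * ?k \<and> snd ij < c * ?k \<and> blk ms (fst ij mod ?k) = blk ms (snd ij mod ?k)}"
  define g where "g = (\<lambda>ij. X $$ ij \<cdot>\<^sub>m kron (munit r c (fst ij div ?k) (snd ij div ?k)) (munit ?k ?k (fst ij mod ?k) (snd ij mod ?k)))"
  have finJ: "finite J" unfolding J_def
    by (rule finite_subset[of _ "{..<r * ?k} \<times> {..<c * ?k}"]) auto
  have Xc: "X \<in> carrier_mat (r * ?k) (c * ?k)" using assms by (simp add: bd_def)
  have "X = msum (r * ?k) (c * ?k) g J"
  proof (rule eq_matI)
    fix a b assume a: "a < dim_row (msum (r * ?k) (c * ?k) g J)" and b: "b < dim_col (msum (r * ?k) (c * ?k) g J)"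
    then have a: "a < r * ?k" and b: "b < c * ?k" by auto
    have k: "0 < ?k" using a by (cases ?k) auto
    have "msum (r * ?k) (c * ?k) g J $$ (a,b) = (\<Sum>ij\<in>J. g ij $$ (a,b))" using a b by (simp add: index_msum)
    also have "\<dots> = (\<Sum>ij\<in>J. if ij = (a,b) then X $$ (a,b) else 0)"
    proof (rule sum.cong[OF refl])
      fix ij assume "ij \<in> J"
      then have ij: "fst ij < r * ?k" "snd ij < c * ?k" by (auto simp: J_def)
      have ad: "a div ?k < r" "b div ?k < c" using a b k by (auto simp: less_mult_imp_div_less)
      have "g ij $$ (a,b) = X $$ ij * ((if a div ?k = fst ij div ?k \<and> b div ?k = snd ij div ?k then 1 else 0) *
             (if a mod ?k = fst ij mod ?k \<and> b mod ?k = snd ij mod ?k then 1 else 0))"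
        unfolding g_def using a b k ad by (simp add: kron_index)
      also have "\<dots> = (if ij = (a,b) then X $$ (a,b) else 0)"
        by (cases ij) (auto, metis div_mult_mod_eq, metis div_mult_mod_eq)
      finally show "g ij $$ (a,b) = (if ij = (a,b) then X $$ (a,b) else 0)" .
    qed
    also have "\<dots> = (if (a,b) \<in> J then X $$ (a,b) else 0)"
      using finJ by (simp add: sum.delta')
    also have "\<dots> = X $$ (a,b)"
      using assms a b unfolding J_def bd_def by auto
    finally show "X $$ (a,b) = msum (r * ?k) (c * ?k) g J $$ (a,b)" by simp
  qed (use Xc in auto)
  also have "\<dots> \<in> tensN r c ms"
  proof (rule msubspace_msum[OF _ finJ])
    show "msubspace (r * ?k) (c * ?k) (tensN r c ms)" unfolding tensN_def
    proof (rule msubspace_mspan, safe)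
      fix X Y :: cmat assume "X \<in> carrier_mat r c" "Y \<in> Nop ms"
      then show "kron X Y \<in> carrier_mat (r * ?k) (c * ?k)" using Nop_carrier[of Y ms]
        by (metis carrier_matD kron_carrier)
    qed
    fix ij assume ij: "ij \<in> J"
    then have ij1: "fst ij < r * ?k" "snd ij < c * ?k" "blk ms (fst ij mod ?k) = blk ms (snd ij mod ?k)" by (auto simp: J_def)
    have k: "0 < ?k" using ij1 by (cases ?k) auto
    have "munit ?k ?k (fst ij mod ?k) (snd ij mod ?k) \<in> Nop ms"
      using k ij1 by (intro munit_Nop) auto
    then have "kron (munit r c (fst ij div ?k) (snd ij div ?k)) (munit ?k ?k (fst ij mod ?k) (snd ij mod ?k)) \<in> tensN r c ms"
      unfolding tensN_def by (intro mspan_base) (blast intro: munit_carrier)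
    then show "g ij \<in> tensN r c ms" unfolding g_def tensN_def by (rule mspan_smult)
  qed
  finally show ?thesis .
qed

lemma tensN_bd: "tensN r c ms = {X. bd ms r c X}"
  using tensN_sub_bd bd_sub_tensN by auto

lemma adj_carrier[simp]: "A \<in> carrier_mat r c \<Longrightarrow> adj A \<in> carrier_mat c r"
  by (auto simp: adj_def)

lemma dim_adj[simp]: "dim_row (adj A) = dim_col A" "dim_col (adj A) = dim_row A"
  by (auto simp: adj_def)

lemma adj_index[simp]: "i < dim_col A \<Longrightarrow> j < dim_row A \<Longrightarrow> adj A $$ (i,j) = cnj (A $$ (j,i))"
  by (auto simp: adj_def)

lemma adj_adj[simp]: "adj (adj A) = A"
  by (rule eq_matI) auto

lemma adj_mult: assumes "A \<in> carrier_mat r n" "B \<in> carrier_mat n c"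
  shows "adj (A * B) = adj B * adj A"
proof (rule eq_matI)
  fix i j assume "i < dim_row (adj B * adj A)" "j < dim_col (adj B * adj A)"
  then have i: "i < c" and j: "j < r" using assms by auto
  have "adj (A * B) $$ (i,j) = cnj (\<Sum>t<n. A $$ (j,t) * B $$ (t,i))"
    using assms i j by (simp add: scalar_prod_def atLeast0LessThan)
  also have "\<dots> = (\<Sum>t<n. cnj (B $$ (t,i)) * cnj (A $$ (j,t)))"
    by (simp add: mult.commute)
  also have "\<dots> = (adj B * adj A) $$ (i,j)"
    using assms i j by (simp add: scalar_prod_def atLeast0LessThan)
  finally show "adj (A * B) $$ (i,j) = (adj B * adj A) $$ (i,j)" .
qed (use assms in auto)

lemma adj_add: assumes "A \<in> carrier_mat r c" "B \<in> carrier_mat r c" shows "adj (A + B) = adj A + adj B"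
  by (rule eq_matI) (use assms in auto)

lemma adj_smult: "adj (a \<cdot>\<^sub>m A) = cnj a \<cdot>\<^sub>m adj A"
  by (rule eq_matI) auto

lemma adj_minus: assumes "A \<in> carrier_mat r c" "B \<in> carrier_mat r c" shows "adj (A - B) = adj A - adj B"
  by (rule eq_matI) (use assms in auto)

lemma adj_one[simp]: "adj (1\<^sub>m n) = 1\<^sub>m n"
  by (rule eq_matI) auto

lemma adj_zero[simp]: "adj (0\<^sub>m r c) = 0\<^sub>m c r"
  by (rule eq_matI) auto

lemma sum_sq_zero: fixes f :: "nat \<Rightarrow> complex"
  assumes "(\<Sum>t<n. cnj (f t) * f t) = 0" "t < n" shows "f t = 0"
proof -
  have "Re (\<Sum>t<n. cnj (f t) * f t) = (\<Sum>t<n. (Re (f t))^2 + (Im (f t))^2)"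
    by (simp add: power2_eq_square)
  then have "(\<Sum>t<n. (Re (f t))^2 + (Im (f t))^2) = 0" using assms(1) by simp
  then have "(Re (f t))^2 + (Im (f t))^2 = 0" using assms(2)
    by (subst (asm) sum_nonneg_eq_0_iff) auto
  then have "Re (f t) = 0" "Im (f t) = 0" by (simp_all add: sum_power2_eq_zero_iff)
  then show ?thesis by (simp add: complex_eq_iff)
qed

lemma adj_self_zero: assumes A: "A \<in> carrier_mat r c" and z: "adj A * A = 0\<^sub>m c c"
  shows "A = 0\<^sub>m r c"
proof (rule eq_matI)
  fix i j assume "i < dim_row (0\<^sub>m r c)" "j < dim_col (0\<^sub>m r c)"
  then have i: "i < r" and j: "j < c" by auto
  have "(adj A * A) $$ (j,j) = (\<Sum>t<r. cnj (A $$ (t,j)) * A $$ (t,j))"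
    using A j by (simp add: scalar_prod_def atLeast0LessThan)
  then have "(\<Sum>t<r. cnj (A $$ (t,j)) * A $$ (t,j)) = 0" using z j by simp
  from sum_sq_zero[OF this i] show "A $$ (i,j) = 0\<^sub>m r c $$ (i,j)" using i j by simp
qed (use A in auto)

lemma bd_carrier: "bd ms r c X \<Longrightarrow> X \<in> carrier_mat (r * tdim ms) (c * tdim ms)"
  by (simp add: bd_def)

lemma bd_mult: assumes X: "bd ms r c X" and Y: "bd ms c s Y" shows "bd ms r s (X * Y)"
  unfolding bd_def
proof (intro conjI allI impI)
  let ?k = "tdim ms"
  have Xc: "X \<in> carrier_mat (r * ?k) (c * ?k)" and Yc: "Y \<in> carrier_mat (c * ?k) (s * ?k)"
    using X Y by (auto simp: bd_def)
  show "X * Y \<in> carrier_mat (r * ?k) (s * ?k)" using Xc Yc by auto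
  fix i j assume i: "i < r * ?k" and j: "j < s * ?k" and b: "blk ms (i mod ?k) \<noteq> blk ms (j mod ?k)"
  have "(X * Y) $$ (i,j) = (\<Sum>t<c * ?k. X $$ (i,t) * Y $$ (t,j))"
    using Xc Yc i j by (simp add: scalar_prod_def atLeast0LessThan)
  also have "\<dots> = 0"
  proof (rule sum.neutral, safe)
    fix t assume t: "t < c * ?k"
    show "X $$ (i,t) * Y $$ (t,j) = 0"
    proof (cases "blk ms (i mod ?k) = blk ms (t mod ?k)")
      case True
      then have "blk ms (t mod ?k) \<noteq> blk ms (j mod ?k)" using b by simp
      then show ?thesis using Y t j by (simp add: bd_def)
    next
      case False then show ?thesis using X t i by (simp add: bd_def)
    qed
  qed
  finally show "(X * Y) $$ (i,j) = 0" .
qed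

lemma bd_adj: assumes "bd ms r c X" shows "bd ms c r (adj X)"
  using assms unfolding bd_def by (auto simp: carrier_matD)

lemma bd_one: "bd ms d d (1\<^sub>m (d * tdim ms))"
  unfolding bd_def by auto

lemma minus_zero_eq: fixes A B :: cmat assumes "A \<in> carrier_mat r c" "B \<in> carrier_mat r c" "A - B = 0\<^sub>m r c" shows "A = B"
proof (rule eq_matI)
  fix i j assume "i < dim_row B" "j < dim_col B"
  then have ij: "i < r" "j < c" using assms by auto
  have "(A - B) $$ (i,j) = 0\<^sub>m r c $$ (i,j)" by (simp only: assms(3))
  moreover have "0\<^sub>m r c $$ (i,j) = (0::complex)" using ij by simp
  moreover have "(A - B) $$ (i,j) = A $$ (i,j) - B $$ (i,j)" using assms(1,2) ij by simp
  ultimately have "A $$ (i,j) - B $$ (i,j) = 0" by metis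
  then show "A $$ (i,j) = B $$ (i,j)" by simp
qed (use assms in auto)

lemma WP_eq: assumes Wc: "W \<in> carrier_mat a n" and Pc: "P \<in> carrier_mat n n"
  and Ph: "adj P = P" and Pi: "P * P = P" and WW: "adj W * W = P"
  shows "W * P = W"
proof -
  let ?I = "1\<^sub>m n"
  define D where "D = W * (?I - P)"
  have IPc: "?I - P \<in> carrier_mat n n" using Pc by auto
  have Dc: "D \<in> carrier_mat a n" using Wc IPc by (simp add: D_def)
  have aIP: "adj (?I - P) = ?I - P" using adj_minus[OF one_carrier_mat Pc] Ph adj_one by (simp only:)
  have adjD: "adj D = (?I - P) * adj W"
    unfolding D_def using adj_mult[OF Wc IPc] aIP by (simp only:)
  have IPP: "(?I - P) * P = 0\<^sub>m n n"
  proof -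
    have "(?I - P) * P = ?I * P - P * P" by (rule minus_mult_distrib_mat[OF one_carrier_mat Pc Pc])
    also have "\<dots> = P - P" using Pi left_mult_one_mat[OF Pc] by (simp only:)
    also have "\<dots> = 0\<^sub>m n n" using Pc by (rule minus_r_inv_mat)
    finally show ?thesis .
  qed
  have aW: "adj W \<in> carrier_mat n a" using Wc by simp
  have "adj D * D = (?I - P) * adj W * D" unfolding adjD ..
  also have "\<dots> = (?I - P) * adj W * (W * (?I - P))" unfolding D_def ..
  also have "\<dots> = (?I - P) * (adj W * (W * (?I - P)))"
    using assoc_mult_mat[OF IPc aW mult_carrier_mat[OF Wc IPc]] .
  also have "adj W * (W * (?I - P)) = (adj W * W) * (?I - P)"
    using assoc_mult_mat[OF aW Wc IPc] by (simp only:)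
  also have "(?I - P) * ((adj W * W) * (?I - P)) = (?I - P) * (adj W * W) * (?I - P)"
    using assoc_mult_mat[OF IPc mult_carrier_mat[OF aW Wc] IPc] by (simp only:)
  also have "\<dots> = 0\<^sub>m n n * (?I - P)" unfolding WW IPP ..
  also have "\<dots> = 0\<^sub>m n n" by (rule left_mult_zero_mat[OF IPc])
  finally have "D = 0\<^sub>m a n" by (rule adj_self_zero[OF Dc])
  then have "W * ?I - W * P = 0\<^sub>m a n" using mult_minus_distrib_mat[OF Wc one_carrier_mat Pc] unfolding D_def by (simp only:)
  then have "W * ?I = W * P" by (rule minus_zero_eq[OF mult_carrier_mat[OF Wc one_carrier_mat] mult_carrier_mat[OF Wc Pc]])
  then show ?thesis using right_mult_one_mat[OF Wc] by (rule trans[OF sym])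
qed

lemma sandwich_assoc: assumes A: "A \<in> carrier_mat p q" and B: "B \<in> carrier_mat q p" and X: "X \<in> carrier_mat p p"
  shows "(A * B) * X * (A * B) = A * (B * X * A) * B"
proof -
  have AB: "A * B \<in> carrier_mat p p" using A B by simp
  have BX: "B * X \<in> carrier_mat q p" using B X by simp
  have BXA: "B * X * A \<in> carrier_mat q q" using BX A by simp
  have "(A * B) * X * (A * B) = (A * (B * X)) * (A * B)" using assoc_mult_mat[OF A B X] by (simp only:)
  also have "\<dots> = A * ((B * X) * (A * B))" using assoc_mult_mat[OF A BX AB] .
  also have "(B * X) * (A * B) = (B * X * A) * B" using assoc_mult_mat[OF BX A B] by (simp only:)
  also have "A * ((B * X * A) * B) = A * (B * X * A) * B" using assoc_mult_mat[OF A BXA B] by (simp only:)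
  finally show ?thesis .
qed

lemma tildeS_eq:
  assumes Pbd: "bd ms (tdim ns) (tdim ns) P" and Ph: "adj P = P" and Pi: "P * P = P"
    and C: "CPhi ns ms Phi = P"
  shows "tildeS ns ms Phi = {X. bd ms (tdim ns) (tdim ns) X \<and> P * X * P = X}"
proof -
  let ?d = "tdim ns" and ?k = "tdim ms"
  let ?R = "{X. bd ms ?d ?d X \<and> P * X * P = X}"
  have Pc: "P \<in> carrier_mat (?d * ?k) (?d * ?k)" using Pbd by (simp add: bd_def)
  have main: "{adj W * Y * W | Y. Y \<in> tensN m m ms} = ?R" if st: "stinespring ns ms Phi m W" for m W
  proof -
    have Wbd: "bd ms m ?d W" and WW: "adj W * W = P"
      using st C by (auto simp: stinespring_def tensN_bd)
    have Wc: "W \<in> carrier_mat (m * ?k) (?d * ?k)" using Wbd by (simp add: bd_def)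
    have WP: "W * P = W" using WP_eq[OF Wc Pc Ph Pi WW] .
    have adjWP: "P * adj W = adj W" using adj_mult[OF Wc Pc] WP Ph by simp
    show ?thesis
    proof (intro equalityI subsetI)
      fix X assume "X \<in> {adj W * Y * W | Y. Y \<in> tensN m m ms}"
      then obtain Y where X: "X = adj W * Y * W" and Y: "bd ms m m Y" by (auto simp: tensN_bd)
      have Yc: "Y \<in> carrier_mat (m * ?k) (m * ?k)" using Y by (simp add: bd_def)
      have "bd ms ?d ?d X" unfolding X by (rule bd_mult[OF bd_mult[OF bd_adj[OF Wbd] Y] Wbd])
      moreover have "P * X * P = X"
      proof -
        have aW: "adj W \<in> carrier_mat (?d * ?k) (m * ?k)" using Wc by simp
        have aWY: "adj W * Y \<in> carrier_mat (?d * ?k) (m * ?k)" using aW Yc by simp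
        have XP: "X * P = X"
        proof -
          have "X * P = adj W * Y * (W * P)" unfolding X by (rule assoc_mult_mat[OF aWY Wc Pc])
          then show ?thesis unfolding WP X .
        qed
        have PX: "P * X = X"
        proof -
          have 1: "P * X = (P * (adj W * Y)) * W" unfolding X by (rule assoc_mult_mat[OF Pc aWY Wc, symmetric])
          have 2: "P * (adj W * Y) = adj W * Y" using assoc_mult_mat[OF Pc aW Yc, symmetric] adjWP by (simp only:)
          have "P * X = adj W * Y * W" unfolding 1 2 ..
          then show ?thesis using X by (rule trans[OF _ sym])
        qed
        have Xc: "X \<in> carrier_mat (?d * ?k) (?d * ?k)" unfolding X using aWY Wc by simp
        show ?thesis using assoc_mult_mat[OF Pc Xc Pc] XP PX by (simp only:)
      qed
      ultimately show "X \<in> ?R" by simp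
    next
      fix X assume "X \<in> ?R"
      then have Xbd: "bd ms ?d ?d X" and PXP: "P * X * P = X" by auto
      have Xc: "X \<in> carrier_mat (?d * ?k) (?d * ?k)" using Xbd by (simp add: bd_def)
      have "X = (adj W * W) * X * (adj W * W)" using PXP WW by simp
      also have "\<dots> = adj W * (W * X * adj W) * W"
        by (rule sandwich_assoc[OF adj_carrier[OF Wc] Wc Xc])
      finally have "X = adj W * (W * X * adj W) * W" .
      moreover have "W * X * adj W \<in> tensN m m ms"
        unfolding tensN_bd using bd_mult[OF bd_mult[OF Wbd Xbd] bd_adj[OF Wbd]] by simp
      ultimately show "X \<in> {adj W * Y * W | Y. Y \<in> tensN m m ms}" by blast
    qed
  qed
  have ex: "stinespring ns ms Phi ?d P"
    unfolding stinespring_def using Pbd Ph Pi C by (simp add: tensN_bd)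
  show ?thesis unfolding tildeS_def
  proof (rule someI2_ex)
    show "\<exists>S. \<exists>m W. stinespring ns ms Phi m W \<and> S = {adj W * Y * W | Y. Y \<in> tensN m m ms}"
      using ex by blast
  next
    fix S assume "\<exists>m W. stinespring ns ms Phi m W \<and> S = {adj W * Y * W | Y. Y \<in> tensN m m ms}"
    then show "S = ?R" using main by blast
  qed
qed

definition ip :: "complex vec \<Rightarrow> complex vec \<Rightarrow> complex" where
  "ip u w = (\<Sum>t<dim_vec w. cnj (u $ t) * w $ t)"

definition orth :: "complex vec list \<Rightarrow> bool" where
  "orth es \<longleftrightarrow> (\<forall>i<length es. \<forall>j<length es. i \<noteq> j \<longrightarrow> ip (es ! i) (es ! j) = 0)"

lemma ip_self_nonzero: assumes "u \<in> carrier_vec N" "u \<noteq> 0\<^sub>v N" shows "ip u u \<noteq> 0"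
proof
  assume "ip u u = 0"
  then have z: "(\<Sum>t<N. cnj (u $ t) * u $ t) = 0" using assms by (simp add: ip_def)
  have "u = 0\<^sub>v N"
    by (rule eq_vecI) (use assms sum_sq_zero[OF z] in auto)
  then show False using assms by simp
qed

lemma ip_self_real: "cnj (ip u u) = ip u u"
  unfolding ip_def by (simp add: mult.commute)

lemma ip_cnj: assumes "dim_vec u = dim_vec w" shows "cnj (ip u w) = ip w u"
  unfolding ip_def using assms by (simp add: mult.commute)

lemma ortho_bound: assumes es: "set es \<subseteq> carrier_vec N" and nz: "\<forall>e\<in>set es. e \<noteq> 0\<^sub>v N" and o: "orth es"
  shows "length es \<le> N"
proof (rule ccontr)
  let ?n = "length es"
  assume "\<not> ?n \<le> N"
  then have nN: "N < ?n" by simp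
  define E where "E = mat ?n ?n (\<lambda>(t,j). if t < N then es ! j $ t else 0)"
  have Ec: "E \<in> carrier_mat ?n ?n" by (simp add: E_def)
  have "transpose_mat E *\<^sub>v unit_vec ?n (?n - 1) = 0\<^sub>v ?n"
  proof (rule eq_vecI)
    fix j assume "j < dim_vec (0\<^sub>v ?n :: complex vec)"
    then have j: "j < ?n" by simp
    have "(transpose_mat E *\<^sub>v unit_vec ?n (?n - 1)) $ j = (\<Sum>t<?n. E $$ (t,j) * unit_vec ?n (?n - 1) $ t)"
      using j Ec by (simp add: scalar_prod_def atLeast0LessThan)
    also have "\<dots> = (\<Sum>t<?n. if t = ?n - 1 then E $$ (t,j) else 0)"
      by (rule sum.cong) auto
    also have "\<dots> = E $$ (?n - 1, j)" using nN by simp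
    also have "\<dots> = 0" using j nN by (simp add: E_def)
    finally show "(transpose_mat E *\<^sub>v unit_vec ?n (?n - 1)) $ j = 0\<^sub>v ?n $ j" using j by simp
  qed (use Ec in simp)
  moreover have "unit_vec ?n (?n - 1) \<noteq> (0\<^sub>v ?n :: complex vec)" using nN by simp
  moreover have Etc: "transpose_mat E \<in> carrier_mat ?n ?n" using Ec by simp
  ultimately have "det (transpose_mat E) = 0"
    unfolding det_0_iff_vec_prod_zero[OF Etc] by (intro exI[of _ "unit_vec ?n (?n - 1)"]) simp
  then have "det E = 0" using det_transpose[OF Ec] by simp
  then obtain v where v: "v \<in> carrier_vec ?n" "v \<noteq> 0\<^sub>v ?n" "E *\<^sub>v v = 0\<^sub>v ?n"
    using det_0_iff_vec_prod_zero[OF Ec] by auto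
  have Ev: "(\<Sum>j<?n. es ! j $ t * v $ j) = 0" if t: "t < N" for t
  proof -
    have "(E *\<^sub>v v) $ t = 0" using v t nN by simp
    moreover have "(E *\<^sub>v v) $ t = (\<Sum>j<?n. es ! j $ t * v $ j)"
      using t nN v(1) Ec by (simp add: scalar_prod_def atLeast0LessThan E_def)
    ultimately show ?thesis by simp
  qed
  have "v = 0\<^sub>v ?n"
  proof (rule eq_vecI)
    fix i assume "i < dim_vec (0\<^sub>v ?n :: complex vec)"
    then have i: "i < ?n" by simp
    have esi: "es ! i \<in> carrier_vec N" "es ! i \<noteq> 0\<^sub>v N" using es nz nth_mem[OF i] by blast+
    have dimj: "\<And>j. j < ?n \<Longrightarrow> dim_vec (es ! j) = N" using es nth_mem carrier_vecD by blast
    have "0 = (\<Sum>t<N. cnj (es ! i $ t) * (\<Sum>j<?n. es ! j $ t * v $ j))"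
      by (rule sym, rule sum.neutral) (simp add: Ev)
    also have "\<dots> = (\<Sum>t<N. \<Sum>j<?n. v $ j * (cnj (es ! i $ t) * es ! j $ t))"
      by (rule sum.cong[OF refl], subst sum_distrib_left, rule sum.cong[OF refl]) (simp add: ac_simps)
    also have "\<dots> = (\<Sum>j<?n. \<Sum>t<N. v $ j * (cnj (es ! i $ t) * es ! j $ t))"
      by (rule sum.swap)
    also have "\<dots> = (\<Sum>j<?n. v $ j * (\<Sum>t<N. cnj (es ! i $ t) * es ! j $ t))"
      by (simp add: sum_distrib_left)
    also have "\<dots> = (\<Sum>j<?n. v $ j * ip (es ! i) (es ! j))"
      by (rule sum.cong) (auto simp: ip_def dimj)
    also have "\<dots> = (\<Sum>j<?n. if j = i then v $ i * ip (es ! i) (es ! i) else 0)"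
      using o i unfolding orth_def by (intro sum.cong) auto
    also have "\<dots> = v $ i * ip (es ! i) (es ! i)" using i by simp
    finally have "v $ i * ip (es ! i) (es ! i) = 0" by simp
    then show "v $ i = 0\<^sub>v ?n $ i" using ip_self_nonzero[OF esi] i by simp
  qed (use v in auto)
  then show False using v by simp
qed


definition good :: "nat \<Rightarrow> complex vec set \<Rightarrow> complex vec list \<Rightarrow> bool" where
  "good N U es \<longleftrightarrow> set es \<subseteq> U \<and> (\<forall>e\<in>set es. e \<noteq> 0\<^sub>v N) \<and> orth es"

definition vsub :: "nat \<Rightarrow> complex vec set \<Rightarrow> bool" where
  "vsub N U \<longleftrightarrow> U \<subseteq> carrier_vec N \<and> 0\<^sub>v N \<in> U \<and> (\<forall>u\<in>U. \<forall>w\<in>U. u + w \<in> U) \<and> (\<forall>u\<in>U. \<forall>a. a \<cdot>\<^sub>v u \<in> U)"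

definition coef :: "complex vec list \<Rightarrow> complex vec \<Rightarrow> nat \<Rightarrow> complex" where
  "coef es u j = ip (es ! j) u / ip (es ! j) (es ! j)"

definition resid :: "nat \<Rightarrow> complex vec list \<Rightarrow> complex vec \<Rightarrow> nat \<Rightarrow> complex vec" where
  "resid N es u m = vec N (\<lambda>t. u $ t - (\<Sum>j<m. coef es u j * es ! j $ t))"

lemma resid_in: assumes U: "vsub N U" and es: "set es \<subseteq> U" and u: "u \<in> U" and m: "m \<le> length es"
  shows "resid N es u m \<in> U"
  using m
proof (induction m)
  case 0
  have "resid N es u 0 = u" using U u unfolding resid_def vsub_def by (intro eq_vecI) auto
  then show ?case using u by simp
next
  case (Suc m)
  have "m < length es" using Suc(2) by simp
  then have em: "es ! m \<in> U" using es nth_mem[of m es] by blast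
  have emc: "es ! m \<in> carrier_vec N" using em U unfolding vsub_def by blast
  have "resid N es u (Suc m) = resid N es u m + (- coef es u m) \<cdot>\<^sub>v es ! m"
    unfolding resid_def using emc by (intro eq_vecI) (auto simp: algebra_simps)
  moreover have "resid N es u m \<in> U" using Suc by simp
  ultimately show ?case using em U unfolding vsub_def by metis
qed

lemma resid_orth: assumes U: "vsub N U" and g: "good N U es" and u: "u \<in> U" and i: "i < length es"
  shows "ip (es ! i) (resid N es u (length es)) = 0"
proof -
  let ?n = "length es"
  let ?S = "(\<Sum>t<N. \<Sum>j<?n. coef es u j * (cnj (es ! i $ t) * es ! j $ t))"
  have esc: "\<And>j. j < ?n \<Longrightarrow> es ! j \<in> carrier_vec N" using g U nth_mem unfolding good_def vsub_def by blast
  have uc: "u \<in> carrier_vec N" using u U unfolding vsub_def by blast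
  have esi: "es ! i \<in> carrier_vec N" "es ! i \<noteq> 0\<^sub>v N" using esc[OF i] g nth_mem[OF i] unfolding good_def by blast+
  have h1: "ip (es ! i) (resid N es u ?n) = (\<Sum>t<N. cnj (es ! i $ t) * (u $ t - (\<Sum>j<?n. coef es u j * es ! j $ t)))"
    unfolding ip_def resid_def by simp
  have h2: "(\<Sum>t<N. cnj (es ! i $ t) * (u $ t - (\<Sum>j<?n. coef es u j * es ! j $ t))) =
      (\<Sum>t<N. cnj (es ! i $ t) * u $ t - (\<Sum>j<?n. coef es u j * (cnj (es ! i $ t) * es ! j $ t)))"
  proof (rule sum.cong[OF refl])
    fix t
    have "cnj (es ! i $ t) * (\<Sum>j<?n. coef es u j * es ! j $ t) = (\<Sum>j<?n. coef es u j * (cnj (es ! i $ t) * es ! j $ t))"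
      by (subst sum_distrib_left, rule sum.cong[OF refl]) (simp add: ac_simps)
    then show "cnj (es ! i $ t) * (u $ t - (\<Sum>j<?n. coef es u j * es ! j $ t)) = cnj (es ! i $ t) * u $ t - (\<Sum>j<?n. coef es u j * (cnj (es ! i $ t) * es ! j $ t))"
      by (simp add: right_diff_distrib)
  qed
  have h3: "(\<Sum>t<N. cnj (es ! i $ t) * u $ t - (\<Sum>j<?n. coef es u j * (cnj (es ! i $ t) * es ! j $ t))) = ip (es ! i) u - ?S"
  proof -
    have du: "dim_vec u = N" using uc by simp
    show ?thesis unfolding ip_def du sum_subtractf ..
  qed
  have h4: "?S = (\<Sum>j<?n. \<Sum>t<N. coef es u j * (cnj (es ! i $ t) * es ! j $ t))"
    by (rule sum.swap)
  have h5: "(\<Sum>j<?n. \<Sum>t<N. coef es u j * (cnj (es ! i $ t) * es ! j $ t)) = (\<Sum>j<?n. coef es u j * ip (es ! i) (es ! j))"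
  proof (rule sum.cong[OF refl])
    fix j assume "j \<in> {..<?n}"
    then have "j < ?n" by simp
    then have dj: "dim_vec (es ! j) = N" using carrier_vecD[OF esc] by blast
    have "ip (es ! i) (es ! j) = (\<Sum>t<N. cnj (es ! i $ t) * es ! j $ t)" unfolding ip_def dj ..
    then show "(\<Sum>t<N. coef es u j * (cnj (es ! i $ t) * es ! j $ t)) = coef es u j * ip (es ! i) (es ! j)"
      by (simp add: sum_distrib_left)
  qed
  have o: "orth es" using g by (simp add: good_def)
  have oij: "\<And>j. j < ?n \<Longrightarrow> j \<noteq> i \<Longrightarrow> ip (es ! i) (es ! j) = 0" using o i unfolding orth_def by blast
  have h6: "(\<Sum>j<?n. coef es u j * ip (es ! i) (es ! j)) = (\<Sum>j<?n. if j = i then coef es u i * ip (es ! i) (es ! i) else 0)"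
    by (rule sum.cong[OF refl]) (simp add: oij)
  have h7: "(\<Sum>j<?n. if j = i then coef es u i * ip (es ! i) (es ! i) else (0::complex)) = coef es u i * ip (es ! i) (es ! i)"
    using i by auto
  have h8: "coef es u i * ip (es ! i) (es ! i) = ip (es ! i) u"
    unfolding coef_def using ip_self_nonzero[OF esi] by simp
  show ?thesis unfolding h1 h2 h3 h4 h5 h6 h7 h8 using i by simp
qed

lemma onb_exists: assumes U: "vsub N U"
  shows "\<exists>es. good N U es \<and> (\<forall>u\<in>U. \<forall>t<N. u $ t = (\<Sum>j<length es. coef es u j * es ! j $ t))"
proof -
  have Uc: "U \<subseteq> carrier_vec N" using U by (simp add: vsub_def)
  define L where "L = {n. \<exists>es. good N U es \<and> length es = n}"
  have Lb: "L \<subseteq> {..N}"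
  proof
    fix n assume "n \<in> L"
    then obtain es where "good N U es" "length es = n" by (auto simp: L_def)
    then show "n \<in> {..N}" using ortho_bound[of es N] Uc unfolding good_def by auto
  qed
  have finL: "finite L" using Lb finite_subset by blast
  have "0 \<in> L" unfolding L_def good_def orth_def by (intro CollectI exI[of _ "[]"]) simp
  then have "Max L \<in> L" using finL Max_in by blast
  then obtain es where g: "good N U es" and len: "length es = Max L" by (auto simp: L_def)
  have "\<forall>u\<in>U. \<forall>t<N. u $ t = (\<Sum>j<length es. coef es u j * es ! j $ t)"
  proof (intro ballI allI impI)
    fix u t assume u: "u \<in> U" and t: "t < N"
    let ?r = "resid N es u (length es)"
    have rU: "?r \<in> U" using resid_in[OF U _ u] g by (simp add: good_def)
    have r0: "?r = 0\<^sub>v N"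
    proof (rule ccontr)
      assume nz: "?r \<noteq> 0\<^sub>v N"
      have gr: "good N U (es @ [?r])"
        unfolding good_def
      proof (intro conjI)
        show "set (es @ [?r]) \<subseteq> U" using g rU by (simp add: good_def)
        show "\<forall>e\<in>set (es @ [?r]). e \<noteq> 0\<^sub>v N" using g nz by (simp add: good_def)
        show "orth (es @ [?r])"
          unfolding orth_def
        proof (intro allI impI)
          fix i j assume i: "i < length (es @ [?r])" and j: "j < length (es @ [?r])" and ij: "i \<noteq> j"
          show "ip ((es @ [?r]) ! i) ((es @ [?r]) ! j) = 0"
          proof (cases "i < length es")
            case True note iT = this
            show ?thesis
            proof (cases "j < length es")
              case True
              then show ?thesis using iT ij g by (simp add: nth_append good_def orth_def)
            next
              case False
              then have "j = length es" using j by simp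
              then show ?thesis using iT resid_orth[OF U g u iT] by (simp add: nth_append)
            qed
          next
            case False
            then have ie: "i = length es" using i by simp
            then have jl: "j < length es" using j ij by simp
            have esj: "es ! j \<in> carrier_vec N" using g Uc nth_mem[OF jl] unfolding good_def by blast
            have "ip ?r (es ! j) = cnj (ip (es ! j) ?r)" using esj by (intro ip_cnj[symmetric]) (simp add: resid_def)
            then show ?thesis using ie jl resid_orth[OF U g u jl] by (simp add: nth_append)
          qed
        qed
      qed
      have Lmem: "\<And>xs. good N U xs \<Longrightarrow> length xs \<in> L" unfolding L_def by blast
      from Lmem[OF gr] have "Suc (Max L) \<in> L" using len by simp
      then have "Suc (Max L) \<le> Max L" using finL by simp
      then show False by simp
    qed
    have "?r $ t = 0" using r0 t by simp
    then show "u $ t = (\<Sum>j<length es. coef es u j * es ! j $ t)" using t by (simp add: resid_def)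
  qed
  then show ?thesis using g by blast
qed

definition pm :: "nat \<Rightarrow> complex vec list \<Rightarrow> cmat" where
  "pm N es = mat N N (\<lambda>(r,s). \<Sum>j<length es. es ! j $ r * cnj (es ! j $ s) / ip (es ! j) (es ! j))"

definition outer :: "nat \<Rightarrow> complex vec \<Rightarrow> complex vec \<Rightarrow> cmat" where
  "outer N u w = mat N N (\<lambda>(r,s). u $ r * cnj (w $ s))"

lemma pm_carrier[simp]: "pm N es \<in> carrier_mat N N" by (simp add: pm_def)
lemma dim_pm[simp]: "dim_row (pm N es) = N" "dim_col (pm N es) = N" by (simp_all add: pm_def)
lemma pm_index: "r < N \<Longrightarrow> s < N \<Longrightarrow> pm N es $$ (r,s) = (\<Sum>j<length es. es ! j $ r * cnj (es ! j $ s) / ip (es ! j) (es ! j))"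
  by (simp add: pm_def)
lemma outer_carrier[simp]: "outer N u w \<in> carrier_mat N N" by (simp add: outer_def)
lemma dim_outer[simp]: "dim_row (outer N u w) = N" "dim_col (outer N u w) = N" by (simp_all add: outer_def)
lemma outer_index: "r < N \<Longrightarrow> s < N \<Longrightarrow> outer N u w $$ (r,s) = u $ r * cnj (w $ s)"
  by (simp add: outer_def)

lemma comb_in: assumes U: "vsub N U" and es: "set es \<subseteq> U" and m: "m \<le> length es"
  shows "vec N (\<lambda>r. \<Sum>j<m. c j * es ! j $ r) \<in> U"
  using m
proof (induction m)
  case 0
  have "vec N (\<lambda>r. \<Sum>j<0. c j * es ! j $ r) = 0\<^sub>v N" by (intro eq_vecI) auto
  then show ?case using U by (simp add: vsub_def)
next
  case (Suc m)
  have "m < length es" using Suc(2) by simp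
  then have em: "es ! m \<in> U" using es nth_mem[of m es] by blast
  have emc: "es ! m \<in> carrier_vec N" using em U unfolding vsub_def by blast
  have eq: "vec N (\<lambda>r. \<Sum>j<Suc m. c j * es ! j $ r) = vec N (\<lambda>r. \<Sum>j<m. c j * es ! j $ r) + c m \<cdot>\<^sub>v es ! m"
    using emc by (intro eq_vecI) auto
  have IH: "vec N (\<lambda>r. \<Sum>j<m. c j * es ! j $ r) \<in> U" using Suc by simp
  have addU: "\<And>a b. a \<in> U \<Longrightarrow> b \<in> U \<Longrightarrow> a + b \<in> U" and smU: "\<And>a x. x \<in> U \<Longrightarrow> a \<cdot>\<^sub>v x \<in> U"
    using U unfolding vsub_def by blast+
  show ?case unfolding eq by (rule addU[OF IH smU[OF em]])
qed

lemma pm_vec: assumes v: "v \<in> carrier_vec N" and es: "set es \<subseteq> carrier_vec N"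
  shows "pm N es *\<^sub>v v = vec N (\<lambda>r. \<Sum>j<length es. coef es v j * es ! j $ r)"
proof (rule eq_vecI)
  fix r assume "r < dim_vec (vec N (\<lambda>r. \<Sum>j<length es. coef es v j * es ! j $ r))"
  then have r: "r < N" by simp
  have dv: "dim_vec v = N" using v by simp
  have "(pm N es *\<^sub>v v) $ r = (\<Sum>s<N. (\<Sum>j<length es. es ! j $ r * cnj (es ! j $ s) / ip (es ! j) (es ! j)) * v $ s)"
    using r dv by (simp add: scalar_prod_def atLeast0LessThan pm_index)
  also have "\<dots> = (\<Sum>s<N. \<Sum>j<length es. es ! j $ r / ip (es ! j) (es ! j) * (cnj (es ! j $ s) * v $ s))"
    by (rule sum.cong[OF refl], subst sum_distrib_right, rule sum.cong[OF refl]) simp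
  also have "\<dots> = (\<Sum>j<length es. \<Sum>s<N. es ! j $ r / ip (es ! j) (es ! j) * (cnj (es ! j $ s) * v $ s))"
    by (rule sum.swap)
  also have "\<dots> = (\<Sum>j<length es. coef es v j * es ! j $ r)"
  proof (rule sum.cong[OF refl])
    fix j assume "j \<in> {..<length es}"
    have ipv: "ip (es ! j) v = (\<Sum>s<N. cnj (es ! j $ s) * v $ s)" unfolding ip_def dv ..
    have "(\<Sum>s<N. es ! j $ r / ip (es ! j) (es ! j) * (cnj (es ! j $ s) * v $ s)) = es ! j $ r / ip (es ! j) (es ! j) * ip (es ! j) v"
      unfolding ipv by (rule sum_distrib_left[symmetric])
    then show "(\<Sum>s<N. es ! j $ r / ip (es ! j) (es ! j) * (cnj (es ! j $ s) * v $ s)) = coef es v j * es ! j $ r"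
      unfolding coef_def by simp
  qed
  finally show "(pm N es *\<^sub>v v) $ r = vec N (\<lambda>r. \<Sum>j<length es. coef es v j * es ! j $ r) $ r" using r by simp
qed simp

lemma pm_fix: assumes U: "vsub N U" and g: "good N U es"
  and onb: "\<forall>u\<in>U. \<forall>t<N. u $ t = (\<Sum>j<length es. coef es u j * es ! j $ t)"
  and u: "u \<in> U"
  shows "pm N es *\<^sub>v u = u"
proof -
  have Uc: "U \<subseteq> carrier_vec N" using U by (simp add: vsub_def)
  have esc: "set es \<subseteq> carrier_vec N" using g Uc by (auto simp: good_def)
  have uc: "u \<in> carrier_vec N" using u Uc by blast
  show ?thesis unfolding pm_vec[OF uc esc]
    by (rule eq_vecI) (use onb u uc in auto)
qed

lemma pm_adj: "adj (pm N es) = pm N es"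
proof (rule eq_matI)
  fix r s assume "r < dim_row (pm N es)" "s < dim_col (pm N es)"
  then have r: "r < N" and s: "s < N" by auto
  have "adj (pm N es) $$ (r,s) = cnj (\<Sum>j<length es. es ! j $ s * cnj (es ! j $ r) / ip (es ! j) (es ! j))"
    using r s by (simp add: pm_index)
  also have "\<dots> = (\<Sum>j<length es. es ! j $ r * cnj (es ! j $ s) / ip (es ! j) (es ! j))"
    by (simp add: ip_self_real mult.commute)
  finally show "adj (pm N es) $$ (r,s) = pm N es $$ (r,s)" using r s by (simp add: pm_index)
qed auto

lemma pm_col_in: assumes U: "vsub N U" and g: "good N U es" and t: "t < N"
  shows "col (pm N es) t \<in> U"
proof -
  have "col (pm N es) t = vec N (\<lambda>r. \<Sum>j<length es. (cnj (es ! j $ t) / ip (es ! j) (es ! j)) * es ! j $ r)"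
    using t by (intro eq_vecI) (auto simp: pm_index ac_simps)
  also have "\<dots> \<in> U" using g U by (intro comb_in) (auto simp: good_def)
  finally show ?thesis .
qed

lemma pm_idem: assumes U: "vsub N U" and g: "good N U es"
  and onb: "\<forall>u\<in>U. \<forall>t<N. u $ t = (\<Sum>j<length es. coef es u j * es ! j $ t)"
  shows "pm N es * pm N es = pm N es"
proof (rule eq_matI)
  fix r s assume "r < dim_row (pm N es)" "s < dim_col (pm N es)"
  then have r: "r < N" and s: "s < N" by auto
  have "(pm N es * pm N es) $$ (r,s) = (pm N es *\<^sub>v col (pm N es) s) $ r" using r s by simp
  also have "pm N es *\<^sub>v col (pm N es) s = col (pm N es) s"
    by (rule pm_fix[OF U g onb pm_col_in[OF U g s]])
  finally show "(pm N es * pm N es) $$ (r,s) = pm N es $$ (r,s)" using r s by simp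
qed auto

lemma mult_outer_left: assumes P: "P \<in> carrier_mat N N" and u: "u \<in> carrier_vec N"
  shows "P * outer N u w = outer N (P *\<^sub>v u) w"
proof (rule eq_matI)
  fix r s assume "r < dim_row (outer N (P *\<^sub>v u) w)" "s < dim_col (outer N (P *\<^sub>v u) w)"
  then have r: "r < N" and s: "s < N" by auto
  have "(P * outer N u w) $$ (r,s) = (\<Sum>t<N. P $$ (r,t) * (u $ t * cnj (w $ s)))"
    using P r s by (simp add: scalar_prod_def atLeast0LessThan outer_index)
  also have "\<dots> = (\<Sum>t<N. P $$ (r,t) * u $ t) * cnj (w $ s)"
    unfolding sum_distrib_right by (rule sum.cong[OF refl]) (simp add: mult.assoc)
  also have "\<dots> = outer N (P *\<^sub>v u) w $$ (r,s)"
    using P u r s by (simp add: scalar_prod_def atLeast0LessThan outer_index)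
  finally show "(P * outer N u w) $$ (r,s) = outer N (P *\<^sub>v u) w $$ (r,s)" .
qed (use P in auto)

lemma mult_outer_right: assumes P: "P \<in> carrier_mat N N" and w: "w \<in> carrier_vec N"
  shows "outer N u w * P = outer N u (adj P *\<^sub>v w)"
proof (rule eq_matI)
  fix r s assume "r < dim_row (outer N u (adj P *\<^sub>v w))" "s < dim_col (outer N u (adj P *\<^sub>v w))"
  then have r: "r < N" and s: "s < N" by auto
  have "(outer N u w * P) $$ (r,s) = (\<Sum>t<N. (u $ r * cnj (w $ t)) * P $$ (t,s))"
    using P r s by (simp add: scalar_prod_def atLeast0LessThan outer_index)
  also have "\<dots> = u $ r * cnj (\<Sum>t<N. cnj (P $$ (t,s)) * w $ t)"
  proof -
    have "cnj (\<Sum>t<N. cnj (P $$ (t,s)) * w $ t) = (\<Sum>t<N. P $$ (t,s) * cnj (w $ t))" by simp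
    then show ?thesis by (simp add: ac_simps sum_distrib_left)
  qed
  also have "\<dots> = outer N u (adj P *\<^sub>v w) $$ (r,s)"
    using P w r s by (simp add: scalar_prod_def atLeast0LessThan outer_index)
  finally show "(outer N u w * P) $$ (r,s) = outer N u (adj P *\<^sub>v w) $$ (r,s)" .
qed (use P in auto)

lemma outer_sandwich: assumes P: "P \<in> carrier_mat N N" and Ph: "adj P = P"
  and u: "u \<in> carrier_vec N" and w: "w \<in> carrier_vec N" and Pu: "P *\<^sub>v u = u" and Pw: "P *\<^sub>v w = w"
  shows "P * outer N u w * P = outer N u w"
  using mult_outer_left[OF P u] mult_outer_right[OF P w] Ph Pu Pw by simp


lemma pm_herm_index: "r < N \<Longrightarrow> s < N \<Longrightarrow> cnj (pm N es $$ (s,r)) = pm N es $$ (r,s)"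
proof -
  assume r: "r < N" and s: "s < N"
  have "adj (pm N es) $$ (r,s) = cnj (pm N es $$ (s,r))" using r s by simp
  then show ?thesis using pm_adj[of N es] by simp
qed

lemma pm_span: assumes U: "vsub N U" and g: "good N U es" and Q: "Q \<in> carrier_mat N N"
  and PQP: "pm N es * Q * pm N es = Q"
  shows "Q \<in> mspan N N {outer N u w | u w. u \<in> U \<and> w \<in> U}"
proof -
  let ?P = "pm N es"
  let ?G = "{outer N u w | u w. u \<in> U \<and> w \<in> U}"
  define f where "f tt = Q $$ tt \<cdot>\<^sub>m outer N (col ?P (fst tt)) (col ?P (snd tt))" for tt
  have "Q = msum N N f ({..<N} \<times> {..<N})"
  proof (rule eq_matI)
    fix r s assume "r < dim_row (msum N N f ({..<N} \<times> {..<N}))" "s < dim_col (msum N N f ({..<N} \<times> {..<N}))"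
    then have r: "r < N" and s: "s < N" by auto
    have "msum N N f ({..<N} \<times> {..<N}) $$ (r,s) = (\<Sum>tt\<in>{..<N} \<times> {..<N}. f tt $$ (r,s))"
      using r s by (simp add: index_msum)
    also have "\<dots> = (\<Sum>t<N. \<Sum>t'<N. f (t,t') $$ (r,s))"
      by (subst sum.cartesian_product) (simp add: case_prod_unfold)
    also have "\<dots> = (\<Sum>t<N. \<Sum>t'<N. ?P $$ (r,t) * Q $$ (t,t') * ?P $$ (t',s))"
    proof (rule sum.cong[OF refl], rule sum.cong[OF refl])
      fix t t' assume "t \<in> {..<N}" "t' \<in> {..<N}"
      then have t: "t < N" and t': "t' < N" by auto
      have "f (t,t') $$ (r,s) = Q $$ (t,t') * (?P $$ (r,t) * cnj (?P $$ (s,t')))"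
        using r s t t' by (simp add: f_def outer_index)
      also have "cnj (?P $$ (s,t')) = ?P $$ (t',s)" using pm_herm_index[OF t' s] .
      finally show "f (t,t') $$ (r,s) = ?P $$ (r,t) * Q $$ (t,t') * ?P $$ (t',s)" by simp
    qed
    also have "\<dots> = (\<Sum>t'<N. \<Sum>t<N. ?P $$ (r,t) * Q $$ (t,t') * ?P $$ (t',s))"
      by (rule sum.swap)
    also have "\<dots> = (\<Sum>t'<N. (\<Sum>t<N. ?P $$ (r,t) * Q $$ (t,t')) * ?P $$ (t',s))"
      by (simp add: sum_distrib_right)
    also have "\<dots> = (?P * Q * ?P) $$ (r,s)"
      using r s Q by (simp add: scalar_prod_def atLeast0LessThan)
    finally show "Q $$ (r,s) = msum N N f ({..<N} \<times> {..<N}) $$ (r,s)" using PQP by simp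
  qed (use Q in auto)
  also have "\<dots> \<in> mspan N N ?G"
  proof (rule msubspace_msum)
    show "msubspace N N (mspan N N ?G)" by (rule msubspace_mspan) auto
    show "finite ({..<N} \<times> {..<N})" by simp
    fix tt assume "tt \<in> {..<N} \<times> {..<N}"
    then have "col ?P (fst tt) \<in> U" "col ?P (snd tt) \<in> U"
      using pm_col_in[OF U g] by auto
    then have "outer N (col ?P (fst tt)) (col ?P (snd tt)) \<in> mspan N N ?G"
      by (intro mspan_base) blast
    then show "f tt \<in> mspan N N ?G" unfolding f_def by (rule mspan_smult)
  qed
  finally show ?thesis .
qed

lemma sandwich_subspace: assumes P: "P \<in> carrier_mat N N"
  shows "msubspace N N {Q \<in> carrier_mat N N. P * Q * P = Q}"
  unfolding msubspace_def
proof (intro conjI ballI allI)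
  show "{Q \<in> carrier_mat N N. P * Q * P = Q} \<subseteq> carrier_mat N N" by auto
  show "0\<^sub>m N N \<in> {Q \<in> carrier_mat N N. P * Q * P = Q}" using P by simp
  fix x y assume x: "x \<in> {Q \<in> carrier_mat N N. P * Q * P = Q}" and y: "y \<in> {Q \<in> carrier_mat N N. P * Q * P = Q}"
  have xc: "x \<in> carrier_mat N N" and yc: "y \<in> carrier_mat N N" and px: "P * x * P = x" and py: "P * y * P = y"
    using x y by auto
  have "P * (x + y) = P * x + P * y" by (rule mult_add_distrib_mat[OF P xc yc])
  then have "P * (x + y) * P = (P * x + P * y) * P" by simp
  also have "\<dots> = P * x * P + P * y * P" by (rule add_mult_distrib_mat[OF _ _ P]) (use P xc yc in auto)
  finally have "P * (x + y) * P = P * x * P + P * y * P" .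
  then show "x + y \<in> {Q \<in> carrier_mat N N. P * Q * P = Q}" using px py xc yc by simp
next
  fix x and a :: complex assume x: "x \<in> {Q \<in> carrier_mat N N. P * Q * P = Q}"
  have xc: "x \<in> carrier_mat N N" and px: "P * x * P = x" using x by auto
  have "P * (a \<cdot>\<^sub>m x) = a \<cdot>\<^sub>m (P * x)" by (rule mult_smult_distrib[OF P xc])
  then have "P * (a \<cdot>\<^sub>m x) * P = (a \<cdot>\<^sub>m (P * x)) * P" by simp
  also have "\<dots> = a \<cdot>\<^sub>m (P * x * P)" by (rule mult_smult_assoc_mat) (use P xc in auto)
  finally have "P * (a \<cdot>\<^sub>m x) * P = a \<cdot>\<^sub>m (P * x * P)" .
  then show "a \<cdot>\<^sub>m x \<in> {Q \<in> carrier_mat N N. P * Q * P = Q}" using px xc by simp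
qed

definition vecm :: "nat \<Rightarrow> nat \<Rightarrow> cmat \<Rightarrow> complex vec" where
  "vecm d l x = vec (d * l) (\<lambda>r. x $$ (r div l, r mod l))"

lemma idx_div: "(r::nat) < d * l \<Longrightarrow> r div l < d"
  by (metis div_less_iff_less_mult mult.commute mult_zero_left not_less_zero zero_less_iff_neq_zero)

lemma idx_mod: "(r::nat) < d * l \<Longrightarrow> r mod l < l"
  by (cases "l = 0") auto

lemma idx_comb: "(i::nat) < d \<Longrightarrow> p < l \<Longrightarrow> i * l + p < d * l"
proof -
  assume i: "i < d" and p: "p < l"
  have "i * l + p < (i + 1) * l" using p by simp
  also have "\<dots> \<le> d * l" using i by (intro mult_right_mono) auto
  finally show ?thesis .
qed

lemma vecm_carrier[simp]: "vecm d l x \<in> carrier_vec (d * l)" by (simp add: vecm_def)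
lemma dim_vecm[simp]: "dim_vec (vecm d l x) = d * l" by (simp add: vecm_def)
lemma vecm_index: "r < d * l \<Longrightarrow> vecm d l x $ r = x $$ (r div l, r mod l)" by (simp add: vecm_def)

lemma vecm_add: assumes "x \<in> carrier_mat d l" "y \<in> carrier_mat d l" shows "vecm d l (x + y) = vecm d l x + vecm d l y"
  by (rule eq_vecI) (use assms in \<open>auto simp: vecm_index idx_div idx_mod\<close>)

lemma vecm_smult: assumes "x \<in> carrier_mat d l" shows "vecm d l (a \<cdot>\<^sub>m x) = a \<cdot>\<^sub>v vecm d l x"
  by (rule eq_vecI) (use assms in \<open>auto simp: vecm_index idx_div idx_mod\<close>)

lemma vecm_zero: "vecm d l (0\<^sub>m d l) = 0\<^sub>v (d * l)"
  by (rule eq_vecI) (auto simp: vecm_index idx_div idx_mod)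

lemma vecm_inj0: assumes x: "x \<in> carrier_mat d l" and z: "vecm d l x = 0\<^sub>v (d * l)" shows "x = 0\<^sub>m d l"
proof (rule eq_matI)
  fix i p assume "i < dim_row (0\<^sub>m d l)" "p < dim_col (0\<^sub>m d l)"
  then have i: "i < d" and p: "p < l" by auto
  have r: "i * l + p < d * l" by (rule idx_comb[OF i p])
  have "(i * l + p) div l = i" "(i * l + p) mod l = p" using p by auto
  then have "vecm d l x $ (i * l + p) = x $$ (i,p)" using vecm_index[OF r, of x] by simp
  then show "x $$ (i,p) = 0\<^sub>m d l $$ (i,p)" using z r i p by simp
qed (use x in auto)

lemma sigma_carrier[simp]: "sigma d l x y \<in> carrier_mat (d * l) (d * l)" by (simp add: sigma_def)
lemma dim_sigma[simp]: "dim_row (sigma d l x y) = d * l" "dim_col (sigma d l x y) = d * l" by (simp_all add: sigma_def)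

lemma sigma_outer: assumes x: "x \<in> carrier_mat d l" and y: "y \<in> carrier_mat l d"
  shows "sigma d l x y = outer (d * l) (vecm d l x) (vecm d l (adj y))"
proof (rule eq_matI)
  fix r s assume "r < dim_row (outer (d * l) (vecm d l x) (vecm d l (adj y)))" "s < dim_col (outer (d * l) (vecm d l x) (vecm d l (adj y)))"
  then have r: "r < d * l" and s: "s < d * l" by auto
  show "sigma d l x y $$ (r,s) = outer (d * l) (vecm d l x) (vecm d l (adj y)) $$ (r,s)"
    using r s x y idx_div[OF s] idx_mod[OF s] by (simp add: sigma_def outer_index vecm_index)
qed auto

lemma adj_sigma: assumes x: "x \<in> carrier_mat d l" and y: "y \<in> carrier_mat l d"
  shows "adj (sigma d l x y) = sigma d l (adj y) (adj x)"
proof (rule eq_matI)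
  fix r s assume "r < dim_row (sigma d l (adj y) (adj x))" "s < dim_col (sigma d l (adj y) (adj x))"
  then have r: "r < d * l" and s: "s < d * l" by auto
  show "adj (sigma d l x y) $$ (r,s) = sigma d l (adj y) (adj x) $$ (r,s)"
    using r s x y idx_div[OF s] idx_mod[OF s] idx_div[OF r] idx_mod[OF r] by (simp add: sigma_def mult.commute)
qed auto

lemma sigma_zero1: "sigma d l (0\<^sub>m d l) y = 0\<^sub>m (d * l) (d * l)"
  by (rule eq_matI) (auto simp: sigma_def idx_div idx_mod)

lemma sigma_zero2: "sigma d l x (0\<^sub>m l d) = 0\<^sub>m (d * l) (d * l)"
  by (rule eq_matI) (auto simp: sigma_def idx_div idx_mod)


definition cm :: "nat \<Rightarrow> nat \<Rightarrow> complex vec \<Rightarrow> cmat \<Rightarrow> cmat" where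
  "cm d l z Q = mat d l (\<lambda>(i,p). \<Sum>s<d*l. Q $$ (i*l+p, s) * z $ s)"

definition rm :: "nat \<Rightarrow> nat \<Rightarrow> complex vec \<Rightarrow> cmat \<Rightarrow> cmat" where
  "rm d l z Q = mat l d (\<lambda>(q,j). \<Sum>r<d*l. z $ r * Q $$ (r, j*l+q))"

lemma divmod_comb: "(p::nat) < l \<Longrightarrow> (i * l + p) div l = i \<and> (i * l + p) mod l = p"
  by auto

lemma cm_sigma: assumes x: "x \<in> carrier_mat d l" and y: "y \<in> carrier_mat l d"
  shows "cm d l z (sigma d l x y) = (\<Sum>s<d*l. y $$ (s mod l, s div l) * z $ s) \<cdot>\<^sub>m x"
proof (rule eq_matI)
  fix i p assume "i < dim_row ((\<Sum>s<d*l. y $$ (s mod l, s div l) * z $ s) \<cdot>\<^sub>m x)" "p < dim_col ((\<Sum>s<d*l. y $$ (s mod l, s div l) * z $ s) \<cdot>\<^sub>m x)"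
  then have i: "i < d" and p: "p < l" using x by auto
  have r: "i * l + p < d * l" by (rule idx_comb[OF i p])
  have "cm d l z (sigma d l x y) $$ (i,p) = (\<Sum>s<d*l. x $$ (i,p) * y $$ (s mod l, s div l) * z $ s)"
    unfolding cm_def using i p r divmod_comb[OF p, of i] by (simp add: sigma_def)
  also have "\<dots> = (\<Sum>s<d*l. y $$ (s mod l, s div l) * z $ s) * x $$ (i,p)"
    unfolding sum_distrib_right by (rule sum.cong[OF refl]) (simp add: ac_simps)
  finally show "cm d l z (sigma d l x y) $$ (i,p) = ((\<Sum>s<d*l. y $$ (s mod l, s div l) * z $ s) \<cdot>\<^sub>m x) $$ (i,p)"
    using i p x by simp
qed (use x in \<open>auto simp: cm_def\<close>)

lemma rm_sigma: assumes x: "x \<in> carrier_mat d l" and y: "y \<in> carrier_mat l d"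
  shows "rm d l z (sigma d l x y) = (\<Sum>r<d*l. z $ r * x $$ (r div l, r mod l)) \<cdot>\<^sub>m y"
proof (rule eq_matI)
  fix q j assume "q < dim_row ((\<Sum>r<d*l. z $ r * x $$ (r div l, r mod l)) \<cdot>\<^sub>m y)" "j < dim_col ((\<Sum>r<d*l. z $ r * x $$ (r div l, r mod l)) \<cdot>\<^sub>m y)"
  then have q: "q < l" and j: "j < d" using y by auto
  have s: "j * l + q < d * l" by (rule idx_comb[OF j q])
  have "rm d l z (sigma d l x y) $$ (q,j) = (\<Sum>r<d*l. z $ r * (x $$ (r div l, r mod l) * y $$ (q,j)))"
    unfolding rm_def using q j s divmod_comb[OF q, of j] by (simp add: sigma_def)
  also have "\<dots> = (\<Sum>r<d*l. z $ r * x $$ (r div l, r mod l)) * y $$ (q,j)"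
    unfolding sum_distrib_right by (rule sum.cong[OF refl]) (simp add: ac_simps)
  finally show "rm d l z (sigma d l x y) $$ (q,j) = ((\<Sum>r<d*l. z $ r * x $$ (r div l, r mod l)) \<cdot>\<^sub>m y) $$ (q,j)"
    using q j y by simp
qed (use y in \<open>auto simp: rm_def\<close>)

lemma cm_add: assumes "Q \<in> carrier_mat (d*l) (d*l)" "Q' \<in> carrier_mat (d*l) (d*l)"
  shows "cm d l z (Q + Q') = cm d l z Q + cm d l z Q'"
proof (rule eq_matI)
  fix i p assume "i < dim_row (cm d l z Q + cm d l z Q')" "p < dim_col (cm d l z Q + cm d l z Q')"
  then have i: "i < d" and p: "p < l" by (auto simp: cm_def)
  have r: "i * l + p < d * l" by (rule idx_comb[OF i p])
  show "cm d l z (Q + Q') $$ (i,p) = (cm d l z Q + cm d l z Q') $$ (i,p)"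
    using assms i p r by (simp add: cm_def sum.distrib algebra_simps)
qed (auto simp: cm_def)

lemma cm_smult: assumes "Q \<in> carrier_mat (d*l) (d*l)"
  shows "cm d l z (a \<cdot>\<^sub>m Q) = a \<cdot>\<^sub>m cm d l z Q"
proof (rule eq_matI)
  fix i p assume "i < dim_row (a \<cdot>\<^sub>m cm d l z Q)" "p < dim_col (a \<cdot>\<^sub>m cm d l z Q)"
  then have i: "i < d" and p: "p < l" by (auto simp: cm_def)
  have r: "i * l + p < d * l" by (rule idx_comb[OF i p])
  show "cm d l z (a \<cdot>\<^sub>m Q) $$ (i,p) = (a \<cdot>\<^sub>m cm d l z Q) $$ (i,p)"
    using assms i p r by (simp add: cm_def sum_distrib_left ac_simps)
qed (auto simp: cm_def)

lemma cm_zero: "cm d l z (0\<^sub>m (d*l) (d*l)) = 0\<^sub>m d l"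
  by (rule eq_matI) (auto simp: cm_def idx_comb)

lemma rm_add: assumes "Q \<in> carrier_mat (d*l) (d*l)" "Q' \<in> carrier_mat (d*l) (d*l)"
  shows "rm d l z (Q + Q') = rm d l z Q + rm d l z Q'"
proof (rule eq_matI)
  fix q j assume "q < dim_row (rm d l z Q + rm d l z Q')" "j < dim_col (rm d l z Q + rm d l z Q')"
  then have q: "q < l" and j: "j < d" by (auto simp: rm_def)
  have s: "j * l + q < d * l" by (rule idx_comb[OF j q])
  show "rm d l z (Q + Q') $$ (q,j) = (rm d l z Q + rm d l z Q') $$ (q,j)"
    using assms q j s by (simp add: rm_def sum.distrib algebra_simps)
qed (auto simp: rm_def)

lemma rm_smult: assumes "Q \<in> carrier_mat (d*l) (d*l)"
  shows "rm d l z (a \<cdot>\<^sub>m Q) = a \<cdot>\<^sub>m rm d l z Q"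
proof (rule eq_matI)
  fix q j assume "q < dim_row (a \<cdot>\<^sub>m rm d l z Q)" "j < dim_col (a \<cdot>\<^sub>m rm d l z Q)"
  then have q: "q < l" and j: "j < d" by (auto simp: rm_def)
  have s: "j * l + q < d * l" by (rule idx_comb[OF j q])
  show "rm d l z (a \<cdot>\<^sub>m Q) $$ (q,j) = (a \<cdot>\<^sub>m rm d l z Q) $$ (q,j)"
    using assms q j s by (simp add: rm_def sum_distrib_left ac_simps)
qed (auto simp: rm_def)

lemma rm_zero: "rm d l z (0\<^sub>m (d*l) (d*l)) = 0\<^sub>m l d"
  by (rule eq_matI) (auto simp: rm_def idx_comb)


lemma smult_cancel_mat: fixes c :: complex assumes "c \<noteq> 0" shows "(1 / c) \<cdot>\<^sub>m (c \<cdot>\<^sub>m A) = A"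
  by (rule eq_matI) (use assms in auto)

lemma sigma_set_carrier: "{sigma d l x y | x y. x \<in> V1 \<and> y \<in> V2} \<subseteq> carrier_mat (d*l) (d*l)"
  by auto

lemma cm_mspan: assumes V1: "msubspace d l V1" and V2: "V2 \<subseteq> carrier_mat l d"
  and Q: "Q \<in> mspan (d*l) (d*l) {sigma d l x y | x y. x \<in> V1 \<and> y \<in> V2}"
  shows "cm d l z Q \<in> V1"
  using Q
proof (induction rule: mspan.induct)
  case mspan_zero then show ?case using V1 by (simp add: cm_zero msubspace_def)
next
  case (mspan_base Q)
  then obtain x y where Q: "Q = sigma d l x y" and x: "x \<in> V1" and y: "y \<in> V2" by auto
  have xc: "x \<in> carrier_mat d l" using x V1 by (auto simp: msubspace_def)
  have yc: "y \<in> carrier_mat l d" using y V2 by auto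
  show ?case unfolding Q cm_sigma[OF xc yc] using x V1 by (simp add: msubspace_def)
next
  case (mspan_add Q Q')
  have "Q \<in> carrier_mat (d*l) (d*l)" "Q' \<in> carrier_mat (d*l) (d*l)"
    using mspan_carrier[OF sigma_set_carrier mspan_add(1)] mspan_carrier[OF sigma_set_carrier mspan_add(2)] by auto
  then show ?case using mspan_add V1 by (simp add: cm_add msubspace_def)
next
  case (mspan_smult Q a)
  have "Q \<in> carrier_mat (d*l) (d*l)" using mspan_carrier[OF sigma_set_carrier mspan_smult(1)] .
  then show ?case using mspan_smult V1 by (simp add: cm_smult msubspace_def)
qed

lemma rm_mspan: assumes V1: "V1 \<subseteq> carrier_mat d l" and V2: "msubspace l d V2"
  and Q: "Q \<in> mspan (d*l) (d*l) {sigma d l x y | x y. x \<in> V1 \<and> y \<in> V2}"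
  shows "rm d l z Q \<in> V2"
  using Q
proof (induction rule: mspan.induct)
  case mspan_zero then show ?case using V2 by (simp add: rm_zero msubspace_def)
next
  case (mspan_base Q)
  then obtain x y where Q: "Q = sigma d l x y" and x: "x \<in> V1" and y: "y \<in> V2" by auto
  have xc: "x \<in> carrier_mat d l" using x V1 by auto
  have yc: "y \<in> carrier_mat l d" using y V2 by (auto simp: msubspace_def)
  show ?case unfolding Q rm_sigma[OF xc yc] using y V2 by (simp add: msubspace_def)
next
  case (mspan_add Q Q')
  have "Q \<in> carrier_mat (d*l) (d*l)" "Q' \<in> carrier_mat (d*l) (d*l)"
    using mspan_carrier[OF sigma_set_carrier mspan_add(1)] mspan_carrier[OF sigma_set_carrier mspan_add(2)] by auto
  then show ?case using mspan_add V2 by (simp add: rm_add msubspace_def)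
next
  case (mspan_smult Q a)
  have "Q \<in> carrier_mat (d*l) (d*l)" using mspan_carrier[OF sigma_set_carrier mspan_smult(1)] .
  then show ?case using mspan_smult V2 by (simp add: rm_smult msubspace_def)
qed


lemma ip_vecm_self: "ip (vecm d l x) (vecm d l x) = (\<Sum>s<d*l. cnj (vecm d l x $ s) * vecm d l x $ s)"
  by (simp add: ip_def)

lemma block_proj:
  assumes V1: "msubspace d l V1" and V2: "msubspace l d V2"
    and W: "W = mspan (d*l) (d*l) {sigma d l x y | x y. x \<in> V1 \<and> y \<in> V2}"
    and adjW: "\<forall>Q\<in>W. adj Q \<in> W"
  shows "\<exists>P. P \<in> carrier_mat (d*l) (d*l) \<and> adj P = P \<and> P * P = P \<and>
           W = {Q \<in> carrier_mat (d*l) (d*l). P * Q * P = Q}"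
proof -
  let ?N = "d * l"
  let ?S = "{sigma d l x y | x y. x \<in> V1 \<and> y \<in> V2}"
  have V1c: "V1 \<subseteq> carrier_mat d l" and V2c: "V2 \<subseteq> carrier_mat l d"
    using V1 V2 by (auto simp: msubspace_def)
  have V1a: "\<And>x y. x \<in> V1 \<Longrightarrow> y \<in> V1 \<Longrightarrow> x + y \<in> V1" and V1s: "\<And>a x. x \<in> V1 \<Longrightarrow> a \<cdot>\<^sub>m x \<in> V1"
    and V10: "0\<^sub>m d l \<in> V1"
    using V1 unfolding msubspace_def by blast+
  have V2a: "\<And>x y. x \<in> V2 \<Longrightarrow> y \<in> V2 \<Longrightarrow> x + y \<in> V2" and V2s: "\<And>a x. x \<in> V2 \<Longrightarrow> a \<cdot>\<^sub>m x \<in> V2"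
    and V20: "0\<^sub>m l d \<in> V2"
    using V2 unfolding msubspace_def by blast+
  define X where "X = {x \<in> V1. adj x \<in> V2}"
  define U where "U = vecm d l ` X"
  have XV1: "X \<subseteq> V1" by (auto simp: X_def)
  have vsU: "vsub ?N U"
    unfolding vsub_def
  proof (intro conjI ballI allI)
    show "U \<subseteq> carrier_vec ?N" by (auto simp: U_def)
    have "0\<^sub>m d l \<in> X" using V10 V20 by (simp add: X_def)
    then show "0\<^sub>v ?N \<in> U" unfolding U_def using vecm_zero[of d l] by force
  next
    fix u w assume "u \<in> U" "w \<in> U"
    then obtain x x' where x: "x \<in> X" "u = vecm d l x" and x': "x' \<in> X" "w = vecm d l x'" by (auto simp: U_def)
    have xc: "x \<in> carrier_mat d l" "x' \<in> carrier_mat d l" using x x' XV1 V1c by auto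
    have "x + x' \<in> X" using x x' xc V1a V2a adj_add[OF xc] by (simp add: X_def)
    moreover have "u + w = vecm d l (x + x')" using vecm_add[OF xc] x x' by simp
    ultimately show "u + w \<in> U" by (auto simp: U_def)
  next
    fix u and a :: complex assume "u \<in> U"
    then obtain x where x: "x \<in> X" "u = vecm d l x" by (auto simp: U_def)
    have xc: "x \<in> carrier_mat d l" using x XV1 V1c by auto
    have "a \<cdot>\<^sub>m x \<in> X" using x V1s V2s adj_smult[of a x] by (simp add: X_def)
    moreover have "a \<cdot>\<^sub>v u = vecm d l (a \<cdot>\<^sub>m x)" using vecm_smult[OF xc] x by simp
    ultimately show "a \<cdot>\<^sub>v u \<in> U" by (auto simp: U_def)
  qed
  obtain es where g: "good ?N U es" and onb: "\<forall>u\<in>U. \<forall>t<?N. u $ t = (\<Sum>j<length es. coef es u j * es ! j $ t)"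
    using onb_exists[OF vsU] by blast
  define P where "P = pm ?N es"
  have Pc: "P \<in> carrier_mat ?N ?N" by (simp add: P_def)
  have Ph: "adj P = P" by (simp add: P_def pm_adj)
  have Pi: "P * P = P" unfolding P_def by (rule pm_idem[OF vsU g onb])
  have Pfix: "\<And>u. u \<in> U \<Longrightarrow> P *\<^sub>v u = u" unfolding P_def by (rule pm_fix[OF vsU g onb])
  let ?R = "{Q \<in> carrier_mat ?N ?N. P * Q * P = Q}"
  have Rsub: "msubspace ?N ?N ?R" by (rule sandwich_subspace[OF Pc])
  have SW: "?S \<subseteq> W" unfolding W by (auto intro: mspan_base)
  have gen: "sigma d l x y \<in> ?R" if x: "x \<in> V1" and y: "y \<in> V2" for x y
  proof -
    have xc: "x \<in> carrier_mat d l" using x V1c by auto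
    have yc: "y \<in> carrier_mat l d" using y V2c by auto
    show ?thesis
    proof (cases "x = 0\<^sub>m d l \<or> y = 0\<^sub>m l d")
      case True
      then have "sigma d l x y = 0\<^sub>m ?N ?N" using sigma_zero1 sigma_zero2 by auto
      then show ?thesis using Rsub by (simp add: msubspace_def)
    next
      case False
      then have x0: "x \<noteq> 0\<^sub>m d l" and y0: "y \<noteq> 0\<^sub>m l d" by auto
      have ayc: "adj y \<in> carrier_mat d l" using yc by simp
      have axc: "adj x \<in> carrier_mat l d" using xc by simp
      have ay0: "adj y \<noteq> 0\<^sub>m d l"
      proof
        assume "adj y = 0\<^sub>m d l"
        then have "adj (adj y) = 0\<^sub>m l d" by simp
        then show False using y0 by simp
      qed
      have vx0: "vecm d l x \<noteq> 0\<^sub>v ?N" using vecm_inj0[OF xc] x0 by auto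
      have vy0: "vecm d l (adj y) \<noteq> 0\<^sub>v ?N" using vecm_inj0[OF ayc] ay0 by auto
      have "sigma d l x y \<in> W" using SW x y by blast
      then have sW: "sigma d l (adj y) (adj x) \<in> W" using adjW adj_sigma[OF xc yc] by metis
      then have sW': "sigma d l (adj y) (adj x) \<in> mspan ?N ?N ?S" using W by simp
      define c where "c = ip (vecm d l x) (vecm d l x)"
      have c0: "c \<noteq> 0" unfolding c_def by (rule ip_self_nonzero[OF vecm_carrier vx0])
      have "cm d l (vecm d l x) (sigma d l (adj y) (adj x)) = (\<Sum>s<?N. adj x $$ (s mod l, s div l) * vecm d l x $ s) \<cdot>\<^sub>m adj y"
        by (rule cm_sigma[OF ayc axc])
      also have "(\<Sum>s<?N. adj x $$ (s mod l, s div l) * vecm d l x $ s) = c"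
        unfolding c_def ip_vecm_self
        by (rule sum.cong[OF refl]) (use xc in \<open>auto simp: vecm_index idx_div idx_mod\<close>)
      finally have "c \<cdot>\<^sub>m adj y \<in> V1" using cm_mspan[OF V1 V2c sW'] by metis
      then have "(1 / c) \<cdot>\<^sub>m (c \<cdot>\<^sub>m adj y) \<in> V1" by (rule V1s)
      then have ayV1: "adj y \<in> V1" using smult_cancel_mat[OF c0] by simp
      define z where "z = vec ?N (\<lambda>r. cnj (vecm d l (adj y) $ r))"
      define c' where "c' = ip (vecm d l (adj y)) (vecm d l (adj y))"
      have c'0: "c' \<noteq> 0" unfolding c'_def by (rule ip_self_nonzero[OF vecm_carrier vy0])
      have "rm d l z (sigma d l (adj y) (adj x)) = (\<Sum>r<?N. z $ r * adj y $$ (r div l, r mod l)) \<cdot>\<^sub>m adj x"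
        by (rule rm_sigma[OF ayc axc])
      also have "(\<Sum>r<?N. z $ r * adj y $$ (r div l, r mod l)) = c'"
        unfolding c'_def ip_vecm_self
        by (rule sum.cong[OF refl]) (auto simp: z_def vecm_index)
      finally have "c' \<cdot>\<^sub>m adj x \<in> V2" using rm_mspan[OF V1c V2 sW'] by metis
      then have "(1 / c') \<cdot>\<^sub>m (c' \<cdot>\<^sub>m adj x) \<in> V2" by (rule V2s)
      then have axV2: "adj x \<in> V2" using smult_cancel_mat[OF c'0] by simp
      have xX: "x \<in> X" using x axV2 by (simp add: X_def)
      have ayX: "adj y \<in> X" using ayV1 y by (simp add: X_def)
      have u1: "vecm d l x \<in> U" using xX by (simp add: U_def)
      have u2: "vecm d l (adj y) \<in> U" using ayX by (simp add: U_def)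
      have "P * sigma d l x y * P = sigma d l x y"
        unfolding sigma_outer[OF xc yc]
        by (rule outer_sandwich[OF Pc Ph vecm_carrier vecm_carrier Pfix[OF u1] Pfix[OF u2]])
      then show ?thesis by simp
    qed
  qed
  have "W \<subseteq> ?R" unfolding W by (rule mspan_sub[OF Rsub]) (use gen in blast)
  moreover have "?R \<subseteq> W"
  proof
    fix Q assume "Q \<in> ?R"
    then have Qc: "Q \<in> carrier_mat ?N ?N" and PQP: "pm ?N es * Q * pm ?N es = Q" by (auto simp: P_def)
    have "Q \<in> mspan ?N ?N {outer ?N u w | u w. u \<in> U \<and> w \<in> U}" by (rule pm_span[OF vsU g Qc PQP])
    also have "\<dots> \<subseteq> mspan ?N ?N ?S"
    proof (rule mspan_mono)
      show "?S \<subseteq> carrier_mat ?N ?N" by (rule sigma_set_carrier)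
      show "{outer ?N u w | u w. u \<in> U \<and> w \<in> U} \<subseteq> ?S"
      proof
        fix A assume "A \<in> {outer ?N u w | u w. u \<in> U \<and> w \<in> U}"
        then obtain x x' where A: "A = outer ?N (vecm d l x) (vecm d l x')" and x: "x \<in> X" and x': "x' \<in> X"
          by (auto simp: U_def)
        have xc: "x \<in> carrier_mat d l" and x'c: "x' \<in> carrier_mat d l" using x x' XV1 V1c by auto
        have "A = sigma d l x (adj x')" using sigma_outer[OF xc adj_carrier[OF x'c]] A by simp
        moreover have "x \<in> V1" "adj x' \<in> V2" using x x' by (auto simp: X_def)
        ultimately show "A \<in> ?S" by blast
      qed
    qed
    finally show "Q \<in> W" using W by simp
  qed
  ultimately have "W = ?R" by blast
  then show ?thesis using Pc Ph Pi by blast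
qed

definition cidx :: "nat list \<Rightarrow> nat \<Rightarrow> nat \<Rightarrow> nat" where
  "cidx ms b r = (r div (ms ! b)) * tdim ms + (boff ms b + r mod (ms ! b))"

definition lidx :: "nat list \<Rightarrow> nat \<Rightarrow> nat" where
  "lidx ms R = (R div tdim ms) * (ms ! blk ms (R mod tdim ms)) + (R mod tdim ms - boff ms (blk ms (R mod tdim ms)))"

lemma cidx_props: assumes b: "b < length ms" and r: "r < d * (ms ! b)"
  shows "cidx ms b r < d * tdim ms" "cidx ms b r mod tdim ms = boff ms b + r mod (ms ! b)"
    "cidx ms b r div tdim ms = r div (ms ! b)" "blk ms (cidx ms b r mod tdim ms) = b"
    "lidx ms (cidx ms b r) = r"
proof -
  let ?l = "ms ! b" and ?k = "tdim ms" and ?o = "boff ms b"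
  have rl: "r mod ?l < ?l" using idx_mod[OF r] .
  have rd: "r div ?l < d" using idx_div[OF r] .
  have ok: "?o + ?l \<le> ?k" using boff_bound[OF b] .
  have t: "?o + r mod ?l < ?k" using rl ok by simp
  show "cidx ms b r < d * ?k" unfolding cidx_def using idx_comb[OF rd t] .
  show m: "cidx ms b r mod ?k = ?o + r mod ?l" unfolding cidx_def using t by simp
  show dv: "cidx ms b r div ?k = r div ?l" unfolding cidx_def using t by simp
  show bl: "blk ms (cidx ms b r mod ?k) = b" unfolding m using blk_boff[OF b rl] .
  show "lidx ms (cidx ms b r) = r" unfolding lidx_def m dv blk_boff[OF b rl] by (simp add: div_mult_mod_eq)
qed

lemma lidx_props: assumes R: "R < d * tdim ms"
  shows "lidx ms R < d * (ms ! blk ms (R mod tdim ms))" "cidx ms (blk ms (R mod tdim ms)) (lidx ms R) = R"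
proof -
  let ?k = "tdim ms" and ?t = "R mod tdim ms"
  let ?b = "blk ms ?t"
  let ?l = "ms ! ?b" and ?o = "boff ms ?b"
  have k: "0 < ?k" using R by (cases ?k) auto
  have tk: "?t < ?k" using k by simp
  have iR: "R div ?k < d" using idx_div[OF R] .
  note br = blk_range[OF tk]
  have tl: "?t - ?o < ?l" using br by linarith
  show "lidx ms R < d * ?l" unfolding lidx_def using idx_comb[OF iR tl] .
  have "cidx ms ?b (lidx ms R) = (R div ?k) * ?k + (?o + (?t - ?o))"
    unfolding cidx_def lidx_def using tl by simp
  also have "\<dots> = R" using br by simp
  finally show "cidx ms ?b (lidx ms R) = R" .
qed

lemma compress_carrier[simp]: "compress ns ms b v \<in> carrier_mat (tdim ns * ms ! b) (tdim ns * ms ! b)"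
  by (simp add: compress_def Let_def)

lemma dim_compress[simp]: "dim_row (compress ns ms b v) = tdim ns * ms ! b" "dim_col (compress ns ms b v) = tdim ns * ms ! b"
  by (simp_all add: compress_def Let_def)

lemma compress_index: assumes "r < tdim ns * ms ! b" "s < tdim ns * ms ! b"
  shows "compress ns ms b v $$ (r,s) = v $$ (cidx ms b r, cidx ms b s)"
  using assms by (simp add: compress_def Let_def cidx_def add.assoc)

lemma bd_entry_compress: assumes X: "bd ms (tdim ns) (tdim ns) X" and R: "R < tdim ns * tdim ms" and S: "S < tdim ns * tdim ms"
  and bS: "blk ms (S mod tdim ms) = blk ms (R mod tdim ms)"
  shows "X $$ (R,S) = compress ns ms (blk ms (R mod tdim ms)) X $$ (lidx ms R, lidx ms S)"
proof -
  let ?b = "blk ms (R mod tdim ms)"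
  have k: "0 < tdim ms" using R by (cases "tdim ms") auto
  have "?b < length ms" using blk_range(1)[of "R mod tdim ms" ms] k by simp
  note lR = lidx_props[OF R] and lS = lidx_props[OF S]
  show ?thesis using compress_index[OF lR(1) lS(1)[unfolded bS]] lR(2) lS(2)[unfolded bS] by simp
qed

lemma bd_eq_compress: assumes X: "bd ms (tdim ns) (tdim ns) X" and Y: "bd ms (tdim ns) (tdim ns) Y"
  and c: "\<And>b. b < length ms \<Longrightarrow> compress ns ms b X = compress ns ms b Y"
  shows "X = Y"
proof (rule eq_matI)
  let ?d = "tdim ns" and ?k = "tdim ms"
  have Xc: "X \<in> carrier_mat (?d * ?k) (?d * ?k)" and Yc: "Y \<in> carrier_mat (?d * ?k) (?d * ?k)"
    using X Y by (auto simp: bd_def)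
  fix R S assume "R < dim_row Y" "S < dim_col Y"
  then have R: "R < ?d * ?k" and S: "S < ?d * ?k" using Yc by auto
  show "X $$ (R,S) = Y $$ (R,S)"
  proof (cases "blk ms (S mod ?k) = blk ms (R mod ?k)")
    case True
    have k: "0 < ?k" using R by (cases ?k) auto
    have b: "blk ms (R mod ?k) < length ms" using blk_range(1)[of "R mod ?k" ms] k by simp
    show ?thesis using bd_entry_compress[OF X R S True] bd_entry_compress[OF Y R S True] c[OF b] by simp
  next
    case False
    then show ?thesis using X Y R S by (simp add: bd_def)
  qed
qed (use X Y in \<open>auto simp: bd_def\<close>)


lemma cidx_image: assumes b: "b < length ms"
  shows "cidx ms b ` {..<d * ms ! b} = {T. T < d * tdim ms \<and> blk ms (T mod tdim ms) = b}"
proof (intro equalityI subsetI)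
  fix T assume "T \<in> cidx ms b ` {..<d * ms ! b}"
  then obtain r where r: "r < d * ms ! b" and T: "T = cidx ms b r" by auto
  show "T \<in> {T. T < d * tdim ms \<and> blk ms (T mod tdim ms) = b}" using cidx_props[OF b r] T by simp
next
  fix T assume "T \<in> {T. T < d * tdim ms \<and> blk ms (T mod tdim ms) = b}"
  then have T: "T < d * tdim ms" and bT: "blk ms (T mod tdim ms) = b" by auto
  show "T \<in> cidx ms b ` {..<d * ms ! b}"
    using lidx_props[OF T] bT by (intro image_eqI[of _ _ "lidx ms T"]) auto
qed

lemma cidx_inj: assumes b: "b < length ms" shows "inj_on (cidx ms b) {..<d * ms ! b}"
proof
  fix r s assume "r \<in> {..<d * ms ! b}" "s \<in> {..<d * ms ! b}" and e: "cidx ms b r = cidx ms b s"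
  then have r: "r < d * ms ! b" and s: "s < d * ms ! b" by auto
  have "lidx ms (cidx ms b r) = lidx ms (cidx ms b s)" using e by simp
  then show "r = s" using cidx_props(5)[OF b r] cidx_props(5)[OF b s] by simp
qed

lemma sum_block: assumes b: "b < length ms"
  and z: "\<And>T. T < d * tdim ms \<Longrightarrow> blk ms (T mod tdim ms) \<noteq> b \<Longrightarrow> f T = 0"
  shows "(\<Sum>T<d * tdim ms. f T) = (\<Sum>u<d * ms ! b. f (cidx ms b u))"
proof -
  let ?A = "{T. T < d * tdim ms \<and> blk ms (T mod tdim ms) = b}"
  have "(\<Sum>T<d * tdim ms. f T) = (\<Sum>T\<in>?A. f T)"
    by (rule sum.mono_neutral_right) (use z in auto)
  also have "\<dots> = (\<Sum>T\<in>cidx ms b ` {..<d * ms ! b}. f T)" unfolding cidx_image[OF b] ..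
  also have "\<dots> = (\<Sum>u<d * ms ! b. f (cidx ms b u))"
    by (subst sum.reindex[OF cidx_inj[OF b]]) simp
  finally show ?thesis .
qed

lemma compress_mult: assumes X: "bd ms (tdim ns) (tdim ns) X" and Y: "bd ms (tdim ns) (tdim ns) Y" and b: "b < length ms"
  shows "compress ns ms b (X * Y) = compress ns ms b X * compress ns ms b Y"
proof (rule eq_matI)
  let ?d = "tdim ns" and ?k = "tdim ms" and ?l = "ms ! b"
  have Xc: "X \<in> carrier_mat (?d * ?k) (?d * ?k)" and Yc: "Y \<in> carrier_mat (?d * ?k) (?d * ?k)"
    using X Y by (auto simp: bd_def)
  fix r s assume "r < dim_row (compress ns ms b X * compress ns ms b Y)" "s < dim_col (compress ns ms b X * compress ns ms b Y)"
  then have r: "r < ?d * ?l" and s: "s < ?d * ?l" by auto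
  note cr = cidx_props[OF b r] and cs = cidx_props[OF b s]
  have "compress ns ms b (X * Y) $$ (r,s) = (\<Sum>T<?d * ?k. X $$ (cidx ms b r, T) * Y $$ (T, cidx ms b s))"
    using r s cr cs Xc Yc by (simp add: compress_index scalar_prod_def atLeast0LessThan)
  also have "\<dots> = (\<Sum>u<?d * ?l. X $$ (cidx ms b r, cidx ms b u) * Y $$ (cidx ms b u, cidx ms b s))"
  proof (rule sum_block[OF b])
    fix T assume T: "T < ?d * ?k" and bT: "blk ms (T mod ?k) \<noteq> b"
    have "X $$ (cidx ms b r, T) = 0" using X T bT cr by (simp add: bd_def)
    then show "X $$ (cidx ms b r, T) * Y $$ (T, cidx ms b s) = 0" by simp
  qed
  also have "\<dots> = (compress ns ms b X * compress ns ms b Y) $$ (r,s)"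
    using r s by (simp add: compress_index scalar_prod_def atLeast0LessThan)
  finally show "compress ns ms b (X * Y) $$ (r,s) = (compress ns ms b X * compress ns ms b Y) $$ (r,s)" .
qed auto

lemma compress_adj: assumes X: "X \<in> carrier_mat (tdim ns * tdim ms) (tdim ns * tdim ms)" and b: "b < length ms"
  shows "compress ns ms b (adj X) = adj (compress ns ms b X)"
proof (rule eq_matI)
  fix r s assume "r < dim_row (adj (compress ns ms b X))" "s < dim_col (adj (compress ns ms b X))"
  then have r: "r < tdim ns * ms ! b" and s: "s < tdim ns * ms ! b" by auto
  show "compress ns ms b (adj X) $$ (r,s) = adj (compress ns ms b X) $$ (r,s)"
    using r s cidx_props[OF b r] cidx_props[OF b s] X by (simp add: compress_index)
qed auto

definition diagind :: "nat \<Rightarrow> (nat \<Rightarrow> bool) \<Rightarrow> cmat" where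
  "diagind n f = mat n n (\<lambda>(i,j). if i = j \<and> f i then 1 else 0)"

lemma diagind_carrier[simp]: "diagind n f \<in> carrier_mat n n" by (simp add: diagind_def)
lemma dim_diagind[simp]: "dim_row (diagind n f) = n" "dim_col (diagind n f) = n" by (simp_all add: diagind_def)

lemma diagind_left: assumes Y: "Y \<in> carrier_mat n c"
  shows "diagind n f * Y = mat n c (\<lambda>(i,j). if f i then Y $$ (i,j) else 0)"
proof (rule eq_matI)
  fix i j assume "i < dim_row (mat n c (\<lambda>(i,j). if f i then Y $$ (i,j) else 0))" "j < dim_col (mat n c (\<lambda>(i,j). if f i then Y $$ (i,j) else 0))"
  then have i: "i < n" and j: "j < c" by auto
  have "(diagind n f * Y) $$ (i,j) = (\<Sum>t<n. (if i = t \<and> f i then 1 else 0) * Y $$ (t,j))"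
    using Y i j by (simp add: scalar_prod_def atLeast0LessThan diagind_def)
  also have "\<dots> = (\<Sum>t<n. if t = i then (if f i then Y $$ (i,j) else 0) else 0)"
    by (rule sum.cong[OF refl]) auto
  also have "\<dots> = (if f i then Y $$ (i,j) else 0)" using i by simp
  finally show "(diagind n f * Y) $$ (i,j) = mat n c (\<lambda>(i,j). if f i then Y $$ (i,j) else 0) $$ (i,j)"
    using i j by simp
qed (use Y in auto)

lemma diagind_right: assumes Y: "Y \<in> carrier_mat r n"
  shows "Y * diagind n f = mat r n (\<lambda>(i,j). if f j then Y $$ (i,j) else 0)"
proof (rule eq_matI)
  fix i j assume "i < dim_row (mat r n (\<lambda>(i,j). if f j then Y $$ (i,j) else 0))" "j < dim_col (mat r n (\<lambda>(i,j). if f j then Y $$ (i,j) else 0))"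
  then have i: "i < r" and j: "j < n" by auto
  have "(Y * diagind n f) $$ (i,j) = (\<Sum>t<n. Y $$ (i,t) * (if t = j \<and> f t then 1 else 0))"
    using Y i j by (simp add: scalar_prod_def atLeast0LessThan diagind_def)
  also have "\<dots> = (\<Sum>t<n. if t = j then (if f j then Y $$ (i,j) else 0) else 0)"
    by (rule sum.cong[OF refl]) auto
  also have "\<dots> = (if f j then Y $$ (i,j) else 0)" using j by simp
  finally show "(Y * diagind n f) $$ (i,j) = mat r n (\<lambda>(i,j). if f j then Y $$ (i,j) else 0) $$ (i,j)"
    using i j by simp
qed (use Y in auto)

lemma diagind_comm: assumes Y: "Y \<in> carrier_mat n n"
  and z: "\<And>i j. i < n \<Longrightarrow> j < n \<Longrightarrow> f i \<noteq> f j \<Longrightarrow> Y $$ (i,j) = 0"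
  shows "diagind n f * Y = Y * diagind n f"
  unfolding diagind_left[OF Y] diagind_right[OF Y]
  by (rule eq_matI) (use z in auto)

lemma Z_center: "diagind (tdim ms) (\<lambda>p. blk ms p = b) \<in> center (tdim ms) (Nop ms)"
proof -
  let ?k = "tdim ms"
  let ?Z = "diagind ?k (\<lambda>p. blk ms p = b)"
  have "?Z \<in> blockalg ms" unfolding blockalg_def by (auto simp: diagind_def)
  moreover have "transpose_mat ?Z = ?Z" by (rule eq_matI) (auto simp: diagind_def)
  ultimately have ZN: "?Z \<in> Nop ms" unfolding Nop_def by (metis image_eqI)
  have "?Z \<in> commutant ?k (Nop ms)"
    unfolding commutant_def
  proof (intro CollectI conjI ballI)
    show "?Z \<in> carrier_mat ?k ?k" by simp
    fix Y assume Y: "Y \<in> Nop ms"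
    show "?Z * Y = Y * ?Z"
      by (rule diagind_comm[OF Nop_carrier[OF Y]]) (use Nop_entry[OF Y] in auto)
  qed
  then show ?thesis using ZN by (simp add: center_def)
qed

lemma E_commutant: "diagind (tdim ns) (\<lambda>i. blk ns i = a) \<in> commutant (tdim ns) (blockalg ns)"
  unfolding commutant_def
proof (intro CollectI conjI ballI)
  show "diagind (tdim ns) (\<lambda>i. blk ns i = a) \<in> carrier_mat (tdim ns) (tdim ns)" by simp
  fix X assume X: "X \<in> blockalg ns"
  have Xc: "X \<in> carrier_mat (tdim ns) (tdim ns)" using X by (simp add: blockalg_def)
  show "diagind (tdim ns) (\<lambda>i. blk ns i = a) * X = X * diagind (tdim ns) (\<lambda>i. blk ns i = a)"
    by (rule diagind_comm[OF Xc]) (use X in \<open>auto simp: blockalg_def\<close>)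
qed

lemma kron_one_left: assumes v: "v \<in> carrier_mat (d * k) c" and Zc: "Z \<in> carrier_mat k k"
  shows "kron (1\<^sub>m d) Z * v = mat (d * k) c (\<lambda>(R,S). \<Sum>q<k. Z $$ (R mod k, q) * v $$ ((R div k) * k + q, S))"
proof (rule eq_matI)
  fix R S assume "R < dim_row (mat (d * k) c (\<lambda>(R,S). \<Sum>q<k. Z $$ (R mod k, q) * v $$ ((R div k) * k + q, S)))"
    "S < dim_col (mat (d * k) c (\<lambda>(R,S). \<Sum>q<k. Z $$ (R mod k, q) * v $$ ((R div k) * k + q, S)))"
  then have R: "R < d * k" and S: "S < c" by auto
  have k: "0 < k" using R by (cases k) auto
  have "(kron (1\<^sub>m d) Z * v) $$ (R,S) = (\<Sum>T<d * k. kron (1\<^sub>m d) Z $$ (R,T) * v $$ (T,S))"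
    using R S v Zc by (simp add: scalar_prod_def atLeast0LessThan)
  also have "\<dots> = (\<Sum>T<d * k. if T div k = R div k then Z $$ (R mod k, T mod k) * v $$ (T,S) else 0)"
  proof (rule sum.cong[OF refl])
    fix T assume "T \<in> {..<d * k}"
    then have T: "T < d * k" by simp
    have "kron (1\<^sub>m d) Z $$ (R,T) = 1\<^sub>m d $$ (R div k, T div k) * Z $$ (R mod k, T mod k)"
      using R T Zc by (simp add: kron_index)
    also have "\<dots> = (if T div k = R div k then Z $$ (R mod k, T mod k) else 0)"
      using idx_div[OF R] idx_div[OF T] by auto
    finally show "kron (1\<^sub>m d) Z $$ (R,T) * v $$ (T,S) = (if T div k = R div k then Z $$ (R mod k, T mod k) * v $$ (T,S) else 0)"
      by simp
  qed
  also have "\<dots> = (\<Sum>T\<in>(\<lambda>q. (R div k) * k + q) ` {..<k}. Z $$ (R mod k, T mod k) * v $$ (T,S))"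
  proof (rule sum.mono_neutral_cong_right)
    show "(\<lambda>q. (R div k) * k + q) ` {..<k} \<subseteq> {..<d * k}"
      using idx_comb[OF idx_div[OF R]] by auto
    have img: "T \<in> (\<lambda>q. (R div k) * k + q) ` {..<k}" if "T div k = R div k" for T
    proof (rule image_eqI[of _ _ "T mod k"])
      show "T = R div k * k + T mod k" using that by (metis div_mult_mod_eq)
      show "T mod k \<in> {..<k}" using k by simp
    qed
    show "\<forall>T\<in>{..<d * k} - (\<lambda>q. (R div k) * k + q) ` {..<k}. (if T div k = R div k then Z $$ (R mod k, T mod k) * v $$ (T,S) else 0) = 0"
      using img by auto
  qed auto
  also have "\<dots> = (\<Sum>q<k. Z $$ (R mod k, q) * v $$ ((R div k) * k + q, S))"
    by (subst sum.reindex) (auto simp: inj_on_def)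
  finally show "(kron (1\<^sub>m d) Z * v) $$ (R,S) = mat (d * k) c (\<lambda>(R,S). \<Sum>q<k. Z $$ (R mod k, q) * v $$ ((R div k) * k + q, S)) $$ (R,S)"
    using R S by simp
qed (use v Zc in auto)


lemma one_diagind: "1\<^sub>m n = diagind n (\<lambda>_. True)"
  by (rule eq_matI) (auto simp: diagind_def)

lemma kron_diagind: "kron (diagind d f) (diagind k g) = diagind (d * k) (\<lambda>R. f (R div k) \<and> g (R mod k))"
proof (rule eq_matI)
  fix R S assume "R < dim_row (diagind (d * k) (\<lambda>R. f (R div k) \<and> g (R mod k)))" "S < dim_col (diagind (d * k) (\<lambda>R. f (R div k) \<and> g (R mod k)))"
  then have R: "R < d * k" and S: "S < d * k" by auto
  have "R = S \<longleftrightarrow> R div k = S div k \<and> R mod k = S mod k" by (metis div_mult_mod_eq)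
  then show "kron (diagind d f) (diagind k g) $$ (R,S) = diagind (d * k) (\<lambda>R. f (R div k) \<and> g (R mod k)) $$ (R,S)"
    using R S idx_div[OF R] idx_div[OF S] idx_mod[OF R] idx_mod[OF S] by (auto simp: kron_index diagind_def)
qed auto

lemma qmr_unfold: assumes "qmr ns ms V"
  shows "msubspace (tdim ns * tdim ms) (tdim ns * tdim ms) V"
    "\<And>v. v \<in> V \<Longrightarrow> bd ms (tdim ns) (tdim ns) v"
    "\<And>A v. A \<in> commutant (tdim ns) (blockalg ns) \<Longrightarrow> v \<in> V \<Longrightarrow> kron A (1\<^sub>m (tdim ms)) * v \<in> V"
    "\<And>A v. A \<in> commutant (tdim ns) (blockalg ns) \<Longrightarrow> v \<in> V \<Longrightarrow> v * kron A (1\<^sub>m (tdim ms)) \<in> V"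
    "\<And>Z v. Z \<in> center (tdim ms) (Nop ms) \<Longrightarrow> v \<in> V \<Longrightarrow> kron (1\<^sub>m (tdim ns)) Z * v \<in> V"
  using assms unfolding qmr_def Let_def tensN_bd by auto

lemma V_corner:
  assumes q: "qmr ns ms V" and sy: "symmetric_qmr V" and dec: "decomposable ns ms V"
  shows "\<exists>P. bd ms (tdim ns) (tdim ns) P \<and> adj P = P \<and> P * P = P \<and>
            V = {X. bd ms (tdim ns) (tdim ns) X \<and> P * X * P = X}"
proof -
  let ?d = "tdim ns" and ?k = "tdim ms"
  note Q = qmr_unfold[OF q]
  have Vc: "\<And>v. v \<in> V \<Longrightarrow> v \<in> carrier_mat (?d * ?k) (?d * ?k)" using Q(2) by (simp add: bd_def)
  have Vadj: "\<And>v. v \<in> V \<Longrightarrow> adj v \<in> V" using sy unfolding symmetric_qmr_def by blast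
  let ?W = "\<lambda>b. compress ns ms b ` V"
  let ?prop = "\<lambda>b P. P \<in> carrier_mat (?d * ms ! b) (?d * ms ! b) \<and> adj P = P \<and> P * P = P \<and>
           ?W b = {Q \<in> carrier_mat (?d * ms ! b) (?d * ms ! b). P * Q * P = Q}"
  have ex: "\<exists>P. ?prop b P" if b: "b < length ms" for b
  proof -
    obtain V1 V2 where V1: "msubspace ?d (ms ! b) V1" and V2: "msubspace (ms ! b) ?d V2"
      and W: "?W b = mspan (?d * ms ! b) (?d * ms ! b) {sigma ?d (ms ! b) x y | x y. x \<in> V1 \<and> y \<in> V2}"
      using dec b unfolding decomposable_def decomposable_single_def by blast
    have adjW: "\<forall>Q\<in>?W b. adj Q \<in> ?W b"
    proof
      fix Q assume "Q \<in> ?W b"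
      then obtain v where v: "v \<in> V" and Qv: "Q = compress ns ms b v" by blast
      have "adj Q = compress ns ms b (adj v)" using compress_adj[OF Vc[OF v] b] Qv by simp
      then show "adj Q \<in> ?W b" using Vadj[OF v] by blast
    qed
    show ?thesis using block_proj[OF V1 V2 W adjW] .
  qed
  define Pb where "Pb b = (SOME P. ?prop b P)" for b
  have Pb: "?prop b (Pb b)" if "b < length ms" for b
    unfolding Pb_def by (rule someI_ex[OF ex[OF that]])
  define P where "P = mat (?d * ?k) (?d * ?k) (\<lambda>(R,S). if blk ms (R mod ?k) = blk ms (S mod ?k)
       then Pb (blk ms (R mod ?k)) $$ (lidx ms R, lidx ms S) else 0)"
  have Pbd: "bd ms ?d ?d P" unfolding bd_def P_def by auto
  have cP: "compress ns ms b P = Pb b" if b: "b < length ms" for b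
  proof (rule eq_matI)
    fix r s assume "r < dim_row (Pb b)" "s < dim_col (Pb b)"
    then have r: "r < ?d * ms ! b" and s: "s < ?d * ms ! b" using Pb[OF b] by auto
    note cr = cidx_props[OF b r] and cs = cidx_props[OF b s]
    show "compress ns ms b P $$ (r,s) = Pb b $$ (r,s)"
      using r s cr cs by (simp add: compress_index P_def)
  qed (use Pb[OF b] in auto)
  have Padj: "adj P = P"
  proof (rule bd_eq_compress[OF bd_adj[OF Pbd] Pbd])
    fix b assume b: "b < length ms"
    have "compress ns ms b (adj P) = adj (compress ns ms b P)"
      by (rule compress_adj[OF _ b]) (use Pbd in \<open>simp add: bd_def\<close>)
    then show "compress ns ms b (adj P) = compress ns ms b P" using cP[OF b] Pb[OF b] by simp
  qed
  have Pidem: "P * P = P"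
  proof (rule bd_eq_compress[OF bd_mult[OF Pbd Pbd] Pbd])
    fix b assume b: "b < length ms"
    show "compress ns ms b (P * P) = compress ns ms b P"
      using compress_mult[OF Pbd Pbd b] cP[OF b] Pb[OF b] by simp
  qed
  let ?R = "{X. bd ms ?d ?d X \<and> P * X * P = X}"
  have sub1: "V \<subseteq> ?R"
  proof
    fix v assume v: "v \<in> V"
    have vbd: "bd ms ?d ?d v" using Q(2)[OF v] .
    have "P * v * P = v"
    proof (rule bd_eq_compress[OF bd_mult[OF bd_mult[OF Pbd vbd] Pbd] vbd])
      fix b assume b: "b < length ms"
      have "compress ns ms b v \<in> ?W b" using v by blast
      then have e: "Pb b * compress ns ms b v * Pb b = compress ns ms b v" using Pb[OF b] by blast
      show "compress ns ms b (P * v * P) = compress ns ms b v"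
        using compress_mult[OF bd_mult[OF Pbd vbd] Pbd b] compress_mult[OF Pbd vbd b] cP[OF b] e by simp
    qed
    then show "v \<in> ?R" using vbd by simp
  qed
  have sub2: "?R \<subseteq> V"
  proof
    fix X assume "X \<in> ?R"
    then have Xbd: "bd ms ?d ?d X" and PXP: "P * X * P = X" by auto
    have exv: "\<exists>v. v \<in> V \<and> compress ns ms b v = compress ns ms b X" if b: "b < length ms" for b
    proof -
      have "compress ns ms b X = compress ns ms b (P * X * P)" using PXP by simp
      also have "\<dots> = Pb b * compress ns ms b X * Pb b"
        using compress_mult[OF bd_mult[OF Pbd Xbd] Pbd b] compress_mult[OF Pbd Xbd b] cP[OF b] by simp
      finally have "compress ns ms b X \<in> ?W b" using Pb[OF b] by simp
      then obtain v where "v \<in> V" "compress ns ms b X = compress ns ms b v" by (rule imageE)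
      then show ?thesis by auto
    qed
    define vv where "vv b = (SOME v. v \<in> V \<and> compress ns ms b v = compress ns ms b X)" for b
    have vv: "vv b \<in> V \<and> compress ns ms b (vv b) = compress ns ms b X" if b: "b < length ms" for b
      unfolding vv_def by (rule someI_ex[OF exv[OF b]])
    define Z where "Z b = diagind ?k (\<lambda>p. blk ms p = b)" for b
    define g where "g b = kron (1\<^sub>m ?d) (Z b) * vv b" for b
    have gV: "g b \<in> V" if b: "b < length ms" for b
      unfolding g_def Z_def using Q(5)[OF Z_center] vv[OF b] by blast
    have geq: "g b = mat (?d * ?k) (?d * ?k) (\<lambda>(R,S). if blk ms (R mod ?k) = b then vv b $$ (R,S) else 0)"
      if b: "b < length ms" for b
    proof -
      have "kron (1\<^sub>m ?d) (Z b) = diagind (?d * ?k) (\<lambda>R. True \<and> blk ms (R mod ?k) = b)"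
        unfolding Z_def one_diagind kron_diagind ..
      then show ?thesis unfolding g_def using diagind_left[OF Vc[OF conjunct1[OF vv[OF b]]]] by simp
    qed
    define Y where "Y = msum (?d * ?k) (?d * ?k) g {..<length ms}"
    have YV: "Y \<in> V" unfolding Y_def by (rule msubspace_msum[OF Q(1)]) (use gV in auto)
    have "Y = X"
    proof (rule eq_matI)
      fix R S assume "R < dim_row X" "S < dim_col X"
      then have R: "R < ?d * ?k" and S: "S < ?d * ?k" using Xbd by (auto simp: bd_def)
      let ?b = "blk ms (R mod ?k)"
      have k: "0 < ?k" using R by (cases ?k) auto
      have b: "?b < length ms" using blk_range(1)[of "R mod ?k" ms] k by simp
      have "Y $$ (R,S) = (\<Sum>b<length ms. g b $$ (R,S))" using R S by (simp add: Y_def index_msum)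
      also have "\<dots> = (\<Sum>b<length ms. if b = ?b then vv ?b $$ (R,S) else 0)"
        by (rule sum.cong[OF refl]) (use R S geq in auto)
      also have "\<dots> = vv ?b $$ (R,S)" using b by simp
      also have "\<dots> = X $$ (R,S)"
      proof (cases "blk ms (S mod ?k) = ?b")
        case True
        have vbd: "bd ms ?d ?d (vv ?b)" using Q(2) vv[OF b] by blast
        show ?thesis using bd_entry_compress[OF vbd R S True] bd_entry_compress[OF Xbd R S True] vv[OF b] by simp
      next
        case False
        have vbd: "bd ms ?d ?d (vv ?b)" using Q(2) vv[OF b] by blast
        show ?thesis using vbd Xbd R S False by (simp add: bd_def)
      qed
      finally show "Y $$ (R,S) = X $$ (R,S)" .
    qed (use Xbd in \<open>auto simp: Y_def bd_def\<close>)
    then show "X \<in> V" using YV by simp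
  qed
  show ?thesis using Pbd Padj Pidem sub1 sub2 by blast
qed

lemma P_offblock:
  assumes q: "qmr ns ms V" and VR: "V = {X. bd ms (tdim ns) (tdim ns) X \<and> P * X * P = X}"
    and Pbd: "bd ms (tdim ns) (tdim ns) P" and Pi: "P * P = P"
    and R: "R < tdim ns * tdim ms" and S: "S < tdim ns * tdim ms"
    and ne: "blk ns (R div tdim ms) \<noteq> blk ns (S div tdim ms)"
  shows "P $$ (R,S) = 0"
proof -
  let ?d = "tdim ns" and ?k = "tdim ms"
  let ?a = "blk ns (R div ?k)"
  let ?E = "diagind ?d (\<lambda>i. blk ns i = ?a)"
  let ?K = "kron ?E (1\<^sub>m ?k)"
  note Q = qmr_unfold[OF q]
  have Pc: "P \<in> carrier_mat (?d * ?k) (?d * ?k)" using Pbd by (simp add: bd_def)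
  have Kd: "?K = diagind (?d * ?k) (\<lambda>R. blk ns (R div ?k) = ?a \<and> True)"
    unfolding one_diagind kron_diagind ..
  have Kc: "?K \<in> carrier_mat (?d * ?k) (?d * ?k)" unfolding Kd by simp
  have PPP: "P * P * P = P" using Pi by simp
  have PV: "P \<in> V" using VR Pbd PPP by simp
  have KPV: "?K * P \<in> V" by (rule Q(3)[OF E_commutant PV])
  have PKV: "P * ?K \<in> V" by (rule Q(4)[OF E_commutant PV])
  have e1: "P * (?K * P) * P = ?K * P" using KPV VR by simp
  have e2: "P * (P * ?K) * P = P * ?K" using PKV VR by simp
  have "?K * P = P * (?K * P) * P" using e1 by simp
  also have "P * (?K * P) = P * ?K * P" using assoc_mult_mat[OF Pc Kc Pc] by simp
  also have "P * ?K * P * P = P * ?K * (P * P)" using assoc_mult_mat[OF mult_carrier_mat[OF Pc Kc] Pc Pc] .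
  also have "\<dots> = P * ?K * P" unfolding Pi ..
  finally have 1: "?K * P = P * ?K * P" .
  have "P * ?K = P * (P * ?K) * P" using e2 by simp
  also have "P * (P * ?K) = P * P * ?K" using assoc_mult_mat[OF Pc Pc Kc] by simp
  also have "\<dots> = P * ?K" unfolding Pi ..
  finally have 2: "P * ?K = P * ?K * P" .
  have KP: "?K * P = P * ?K" using 1 2 by simp
  have "(?K * P) $$ (R,S) = P $$ (R,S)"
    unfolding Kd diagind_left[OF Pc] using R S by simp
  moreover have "(P * ?K) $$ (R,S) = 0"
    unfolding Kd diagind_right[OF Pc] using R S ne by simp
  ultimately show ?thesis using KP by simp
qed

definition PhiP :: "nat \<Rightarrow> nat \<Rightarrow> cmat \<Rightarrow> cmat \<Rightarrow> cmat" where
  "PhiP d k P X = mat k k (\<lambda>(p,q). \<Sum>i<d. \<Sum>j<d. X $$ (j,i) * P $$ (i*k+q, j*k+p))"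

lemma PhiP_carrier[simp]: "PhiP d k P X \<in> carrier_mat k k" by (simp add: PhiP_def)
lemma dim_PhiP[simp]: "dim_row (PhiP d k P X) = k" "dim_col (PhiP d k P X) = k" by (simp_all add: PhiP_def)

lemma PhiP_munit: assumes j: "j < d" and i: "i < d" and p: "p < k" and q: "q < k"
  shows "PhiP d k P (munit d d j i) $$ (p,q) = P $$ (i*k+q, j*k+p)"
proof -
  have "PhiP d k P (munit d d j i) $$ (p,q) = (\<Sum>i'<d. \<Sum>j'<d. (if j' = j \<and> i' = i then 1 else 0) * P $$ (i'*k+q, j'*k+p))"
    using p q by (simp add: PhiP_def)
  also have "\<dots> = (\<Sum>i'<d. if i' = i then P $$ (i*k+q, j*k+p) else 0)"
  proof (rule sum.cong[OF refl])
    fix i' assume "i' \<in> {..<d}"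
    show "(\<Sum>j'<d. (if j' = j \<and> i' = i then 1 else 0) * P $$ (i'*k+q, j'*k+p)) = (if i' = i then P $$ (i*k+q, j*k+p) else 0)"
    proof (cases "i' = i")
      case True
      have "(\<Sum>j'<d. (if j' = j \<and> i' = i then 1 else 0) * P $$ (i'*k+q, j'*k+p)) = (\<Sum>j'<d. if j' = j then P $$ (i*k+q, j*k+p) else 0)"
        by (rule sum.cong[OF refl]) (use True in auto)
      then show ?thesis using j True by simp
    next
      case False
      then show ?thesis by simp
    qed
  qed
  also have "\<dots> = P $$ (i*k+q, j*k+p)" using i by simp
  finally show ?thesis .
qed

lemma CPhi_eq:
  assumes Pc: "P \<in> carrier_mat (tdim ns * tdim ms) (tdim ns * tdim ms)"
    and off: "\<And>R S. R < tdim ns * tdim ms \<Longrightarrow> S < tdim ns * tdim ms \<Longrightarrow>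
                blk ns (R div tdim ms) \<noteq> blk ns (S div tdim ms) \<Longrightarrow> P $$ (R,S) = 0"
  shows "CPhi ns ms (PhiP (tdim ns) (tdim ms) P) = P"
proof (rule eq_matI)
  let ?d = "tdim ns" and ?k = "tdim ms"
  let ?SS = "{(i,j). i < ?d \<and> j < ?d \<and> blk ns i = blk ns j}"
  let ?f = "\<lambda>(i,j). kron (munit ?d ?d i j) (transpose_mat (PhiP ?d ?k P (munit ?d ?d j i)))"
  fix R S assume "R < dim_row P" "S < dim_col P"
  then have R: "R < ?d * ?k" and S: "S < ?d * ?k" using Pc by auto
  have k: "0 < ?k" using R by (cases ?k) auto
  have Rd: "R div ?k < ?d" and Sd: "S div ?k < ?d" using idx_div[OF R] idx_div[OF S] .
  have Rm: "R mod ?k < ?k" and Sm: "S mod ?k < ?k" using k by auto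
  have finSS: "finite ?SS" by (rule finite_subset[of _ "{..<?d} \<times> {..<?d}"]) auto
  have "CPhi ns ms (PhiP ?d ?k P) $$ (R,S) = (\<Sum>ij\<in>?SS. ?f ij $$ (R,S))"
    unfolding CPhi_def Let_def using R S by (simp add: index_msum)
  also have "\<dots> = (\<Sum>ij\<in>?SS. if ij = (R div ?k, S div ?k) then P $$ (R,S) else 0)"
  proof (rule sum.cong[OF refl])
    fix ij assume "ij \<in> ?SS"
    then obtain i j where ij: "ij = (i,j)" and i: "i < ?d" and j: "j < ?d" by auto
    have "?f ij $$ (R,S) = munit ?d ?d i j $$ (R div ?k, S div ?k) * PhiP ?d ?k P (munit ?d ?d j i) $$ (S mod ?k, R mod ?k)"
      using ij R S Rm Sm by (simp add: kron_index)
    also have "\<dots> = (if ij = (R div ?k, S div ?k) then P $$ (R,S) else 0)"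
    proof (cases "ij = (R div ?k, S div ?k)")
      case True
      then have "i = R div ?k" "j = S div ?k" using ij by auto
      then show ?thesis using True Rd Sd Rm Sm PhiP_munit[OF j i Sm Rm] by (simp add: div_mult_mod_eq)
    next
      case False
      then have "\<not> (R div ?k = i \<and> S div ?k = j)" using ij by auto
      then show ?thesis using False Rd Sd by auto
    qed
    finally show "?f ij $$ (R,S) = (if ij = (R div ?k, S div ?k) then P $$ (R,S) else 0)" .
  qed
  also have "\<dots> = (if (R div ?k, S div ?k) \<in> ?SS then P $$ (R,S) else 0)"
    using finSS by (simp add: sum.delta')
  also have "\<dots> = P $$ (R,S)" using off[OF R S] Rd Sd by auto
  finally show "CPhi ns ms (PhiP ?d ?k P) $$ (R,S) = P $$ (R,S)" .
qed (use Pc in \<open>auto simp: CPhi_def Let_def\<close>)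

definition quad :: "nat \<Rightarrow> cmat \<Rightarrow> complex vec \<Rightarrow> complex" where
  "quad N A w = (\<Sum>r<N. cnj (w $ r) * (\<Sum>c<N. A $$ (r,c) * w $ c))"

lemma quad_eq: assumes A: "A \<in> carrier_mat N N" and w: "w \<in> carrier_vec N"
  shows "conjugate w \<bullet> (A *\<^sub>v w) = quad N A w"
  using A w by (simp add: quad_def scalar_prod_def atLeast0LessThan)

lemma quad_sum: assumes fin: "finite T"
  and e: "\<And>r c. r < N \<Longrightarrow> c < N \<Longrightarrow> A $$ (r,c) = (\<Sum>t\<in>T. M t $$ (r,c))"
  shows "quad N A w = (\<Sum>t\<in>T. quad N (M t) w)"
proof -
  have "quad N A w = (\<Sum>r<N. cnj (w $ r) * (\<Sum>c<N. (\<Sum>t\<in>T. M t $$ (r,c)) * w $ c))"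
    unfolding quad_def by (rule sum.cong[OF refl]) (simp add: e)
  also have "\<dots> = (\<Sum>r<N. \<Sum>t\<in>T. cnj (w $ r) * (\<Sum>c<N. M t $$ (r,c) * w $ c))"
  proof (rule sum.cong[OF refl])
    fix r
    have "(\<Sum>c<N. (\<Sum>t\<in>T. M t $$ (r,c)) * w $ c) = (\<Sum>c<N. \<Sum>t\<in>T. M t $$ (r,c) * w $ c)"
      by (simp add: sum_distrib_right)
    also have "\<dots> = (\<Sum>t\<in>T. \<Sum>c<N. M t $$ (r,c) * w $ c)" by (rule sum.swap)
    finally show "cnj (w $ r) * (\<Sum>c<N. (\<Sum>t\<in>T. M t $$ (r,c)) * w $ c) = (\<Sum>t\<in>T. cnj (w $ r) * (\<Sum>c<N. M t $$ (r,c) * w $ c))"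
      by (simp add: sum_distrib_left)
  qed
  also have "\<dots> = (\<Sum>t\<in>T. \<Sum>r<N. cnj (w $ r) * (\<Sum>c<N. M t $$ (r,c) * w $ c))" by (rule sum.swap)
  finally show ?thesis unfolding quad_def .
qed

lemma quad_adj: assumes B: "B \<in> carrier_mat a b" and v: "v \<in> carrier_vec a" and w: "w \<in> carrier_vec b"
  shows "conjugate w \<bullet> (adj B *\<^sub>v v) = conjugate (B *\<^sub>v w) \<bullet> v"
proof -
  have "conjugate w \<bullet> (adj B *\<^sub>v v) = (\<Sum>c<b. cnj (w $ c) * (\<Sum>m<a. cnj (B $$ (m,c)) * v $ m))"
    using B v w by (simp add: scalar_prod_def atLeast0LessThan)
  also have "\<dots> = (\<Sum>c<b. \<Sum>m<a. cnj (w $ c) * cnj (B $$ (m,c)) * v $ m)"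
    by (simp add: sum_distrib_left mult.assoc)
  also have "\<dots> = (\<Sum>m<a. \<Sum>c<b. cnj (w $ c) * cnj (B $$ (m,c)) * v $ m)" by (rule sum.swap)
  also have "\<dots> = (\<Sum>m<a. cnj (\<Sum>c<b. B $$ (m,c) * w $ c) * v $ m)"
    by (rule sum.cong[OF refl]) (simp add: sum_distrib_right sum_distrib_left ac_simps)
  also have "\<dots> = conjugate (B *\<^sub>v w) \<bullet> v"
    using B v w by (simp add: scalar_prod_def atLeast0LessThan)
  finally show ?thesis .
qed

lemma sum_fiber: fixes g :: "nat \<Rightarrow> complex" assumes s: "s < n"
  shows "(\<Sum>m<n * d. if m div d = s then g m else 0) = (\<Sum>j<d. g (s * d + j))"
proof -
  have d: "0 < d" if "d \<noteq> 0" using that by simp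
  have "(\<Sum>m<n * d. if m div d = s then g m else 0) = (\<Sum>m\<in>(\<lambda>j. s * d + j) ` {..<d}. g m)"
  proof (rule sum.mono_neutral_cong_right)
    show "(\<lambda>j. s * d + j) ` {..<d} \<subseteq> {..<n * d}"
      using idx_comb[OF s] by (auto simp: mult.commute)
    have img: "m \<in> (\<lambda>j. s * d + j) ` {..<d}" if "m div d = s" "m < n * d" for m
    proof (rule image_eqI[of _ _ "m mod d"])
      show "m = s * d + m mod d" using that by (metis div_mult_mod_eq)
      show "m mod d \<in> {..<d}" using idx_mod[of m n d] that by simp
    qed
    show "\<forall>m\<in>{..<n * d} - (\<lambda>j. s * d + j) ` {..<d}. (if m div d = s then g m else 0) = 0"
      using img by auto
    show "\<And>m. m \<in> (\<lambda>j. s * d + j) ` {..<d} \<Longrightarrow> (if m div d = s then g m else 0) = g m" by auto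
  qed auto
  also have "\<dots> = (\<Sum>j<d. g (s * d + j))"
    by (subst sum.reindex) (auto simp: inj_on_def)
  finally show ?thesis .
qed


definition Bm :: "nat \<Rightarrow> nat \<Rightarrow> nat \<Rightarrow> cmat \<Rightarrow> nat \<Rightarrow> cmat" where
  "Bm n d k P t = mat (n*d) (n*k) (\<lambda>(m,c). if m div d = c div k then P $$ ((m mod d)*k + c mod k, t) else 0)"

lemma Bm_carrier[simp]: "Bm n d k P t \<in> carrier_mat (n*d) (n*k)" by (simp add: Bm_def)
lemma dim_Bm[simp]: "dim_row (Bm n d k P t) = n*d" "dim_col (Bm n d k P t) = n*k" by (simp_all add: Bm_def)

lemma amp_entry: assumes r: "r < n*k" and c: "c < n*k"
  shows "amplify d k n (PhiP d k P) Z $$ (r,c) =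
    (\<Sum>i<d. \<Sum>j<d. Z $$ ((r div k)*d + j, (c div k)*d + i) * P $$ (i*k + c mod k, j*k + r mod k))"
proof -
  have k: "0 < k" using r by (cases k) auto
  have "amplify d k n (PhiP d k P) Z $$ (r,c) = PhiP d k P (subblock d Z (r div k) (c div k)) $$ (r mod k, c mod k)"
    using r c by (simp add: amplify_def)
  also have "\<dots> = (\<Sum>i<d. \<Sum>j<d. subblock d Z (r div k) (c div k) $$ (j,i) * P $$ (i*k + c mod k, j*k + r mod k))"
    using k by (simp add: PhiP_def)
  also have "\<dots> = (\<Sum>i<d. \<Sum>j<d. Z $$ ((r div k)*d + j, (c div k)*d + i) * P $$ (i*k + c mod k, j*k + r mod k))"
    by (intro sum.cong refl) (simp add: subblock_def)
  finally show ?thesis .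
qed

lemma BZB_entry: assumes Z: "Z \<in> carrier_mat (n*d) (n*d)" and r: "r < n*k" and c: "c < n*k"
  shows "(adj (Bm n d k P t) * Z * Bm n d k P t) $$ (r,c) =
    (\<Sum>i<d. \<Sum>j<d. cnj (P $$ (j*k + r mod k, t)) * Z $$ ((r div k)*d + j, (c div k)*d + i) * P $$ (i*k + c mod k, t))"
proof -
  let ?B = "Bm n d k P t"
  let ?X = "adj ?B * Z"
  have rn: "r div k < n" and cn: "c div k < n" using idx_div[OF r] idx_div[OF c] .
  have Xc: "?X \<in> carrier_mat (n*k) (n*d)" using mult_carrier_mat[OF adj_carrier[OF Bm_carrier] Z] .
  have X: "?X $$ (r,m') = (\<Sum>j<d. cnj (P $$ (j*k + r mod k, t)) * Z $$ ((r div k)*d + j, m'))" if m': "m' < n*d" for m'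
  proof -
    have "?X $$ (r,m') = (\<Sum>m<n*d. cnj (?B $$ (m,r)) * Z $$ (m,m'))"
      using Z r m' by (simp add: scalar_prod_def atLeast0LessThan)
    also have "\<dots> = (\<Sum>m<n*d. if m div d = r div k then cnj (P $$ ((m mod d)*k + r mod k, t)) * Z $$ (m,m') else 0)"
      by (rule sum.cong[OF refl]) (use r in \<open>auto simp: Bm_def\<close>)
    also have "\<dots> = (\<Sum>j<d. cnj (P $$ (((r div k)*d + j) mod d * k + r mod k, t)) * Z $$ ((r div k)*d + j, m'))"
      by (rule sum_fiber[OF rn])
    also have "\<dots> = (\<Sum>j<d. cnj (P $$ (j*k + r mod k, t)) * Z $$ ((r div k)*d + j, m'))"
      by (rule sum.cong[OF refl]) simp
    finally show ?thesis .
  qed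
  have "(?X * ?B) $$ (r,c) = (\<Sum>m'<n*d. row ?X r $ m' * ?B $$ (m',c))"
    using Xc r c by (simp add: scalar_prod_def atLeast0LessThan)
  also have "\<dots> = (\<Sum>m'<n*d. ?X $$ (r,m') * ?B $$ (m',c))"
    by (rule sum.cong[OF refl]) (use carrier_matD[OF Xc] r in simp)
  also have "\<dots> = (\<Sum>m'<n*d. if m' div d = c div k then ?X $$ (r,m') * P $$ ((m' mod d)*k + c mod k, t) else 0)"
    by (rule sum.cong[OF refl]) (use c in \<open>auto simp: Bm_def\<close>)
  also have "\<dots> = (\<Sum>i<d. ?X $$ (r, (c div k)*d + i) * P $$ ((((c div k)*d + i) mod d)*k + c mod k, t))"
    by (rule sum_fiber[OF cn])
  also have "\<dots> = (\<Sum>i<d. (\<Sum>j<d. cnj (P $$ (j*k + r mod k, t)) * Z $$ ((r div k)*d + j, (c div k)*d + i)) * P $$ (i*k + c mod k, t))"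
  proof (rule sum.cong[OF refl])
    fix i assume "i \<in> {..<d}"
    then have i: "i < d" by simp
    have "(c div k)*d + i < n*d" using idx_comb[OF cn i] by (simp add: mult.commute)
    then show "?X $$ (r, (c div k)*d + i) * P $$ ((((c div k)*d + i) mod d)*k + c mod k, t) =
      (\<Sum>j<d. cnj (P $$ (j*k + r mod k, t)) * Z $$ ((r div k)*d + j, (c div k)*d + i)) * P $$ (i*k + c mod k, t)"
      using X i by simp
  qed
  also have "\<dots> = (\<Sum>i<d. \<Sum>j<d. cnj (P $$ (j*k + r mod k, t)) * Z $$ ((r div k)*d + j, (c div k)*d + i) * P $$ (i*k + c mod k, t))"
    by (simp add: sum_distrib_right)
  finally show ?thesis .
qed


lemma P_fac: assumes Pc: "P \<in> carrier_mat N N" and Ph: "adj P = P" and Pi: "P * P = P"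
  and a: "a < N" and b: "b < N"
  shows "P $$ (a,b) = (\<Sum>t<N. P $$ (a,t) * cnj (P $$ (b,t)))"
proof -
  have "P $$ (a,b) = (P * P) $$ (a,b)" using Pi by simp
  also have "\<dots> = (\<Sum>t<N. P $$ (a,t) * P $$ (t,b))" using Pc a b by (simp add: scalar_prod_def atLeast0LessThan)
  also have "\<dots> = (\<Sum>t<N. P $$ (a,t) * cnj (P $$ (b,t)))"
  proof (rule sum.cong[OF refl])
    fix t assume "t \<in> {..<N}"
    then have t: "t < N" by simp
    have "adj P $$ (t,b) = cnj (P $$ (b,t))" using Pc t b by simp
    then show "P $$ (a,t) * P $$ (t,b) = P $$ (a,t) * cnj (P $$ (b,t))" using Ph by simp
  qed
  finally show ?thesis .
qed

lemma amp_sum: assumes Pc: "P \<in> carrier_mat (d*k) (d*k)" and Ph: "adj P = P" and Pi: "P * P = P"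
  and Z: "Z \<in> carrier_mat (n*d) (n*d)" and r: "r < n*k" and c: "c < n*k"
  shows "amplify d k n (PhiP d k P) Z $$ (r,c) = (\<Sum>t<d*k. (adj (Bm n d k P t) * Z * Bm n d k P t) $$ (r,c))"
proof -
  have k: "0 < k" using r by (cases k) auto
  let ?r = "r mod k" and ?c = "c mod k"
  let ?Z = "\<lambda>i j. Z $$ ((r div k)*d + j, (c div k)*d + i)"
  have rk: "?r < k" and ck: "?c < k" using k by auto
  have "(\<Sum>t<d*k. (adj (Bm n d k P t) * Z * Bm n d k P t) $$ (r,c)) =
     (\<Sum>t<d*k. \<Sum>i<d. \<Sum>j<d. cnj (P $$ (j*k + ?r, t)) * ?Z i j * P $$ (i*k + ?c, t))"
    by (rule sum.cong[OF refl]) (rule BZB_entry[OF Z r c])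
  also have "\<dots> = (\<Sum>i<d. \<Sum>t<d*k. \<Sum>j<d. cnj (P $$ (j*k + ?r, t)) * ?Z i j * P $$ (i*k + ?c, t))"
    by (rule sum.swap)
  also have "\<dots> = (\<Sum>i<d. \<Sum>j<d. \<Sum>t<d*k. cnj (P $$ (j*k + ?r, t)) * ?Z i j * P $$ (i*k + ?c, t))"
    by (rule sum.cong[OF refl]) (rule sum.swap)
  also have "\<dots> = (\<Sum>i<d. \<Sum>j<d. ?Z i j * P $$ (i*k + ?c, j*k + ?r))"
  proof (rule sum.cong[OF refl], rule sum.cong[OF refl])
    fix i j assume "i \<in> {..<d}" "j \<in> {..<d}"
    then have i: "i*k + ?c < d*k" and j: "j*k + ?r < d*k" using idx_comb ck rk by auto
    have "(\<Sum>t<d*k. cnj (P $$ (j*k + ?r, t)) * ?Z i j * P $$ (i*k + ?c, t)) =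
        ?Z i j * (\<Sum>t<d*k. P $$ (i*k + ?c, t) * cnj (P $$ (j*k + ?r, t)))"
      by (simp add: sum_distrib_left ac_simps)
    also have "\<dots> = ?Z i j * P $$ (i*k + ?c, j*k + ?r)"
      using P_fac[OF Pc Ph Pi i j] by simp
    finally show "(\<Sum>t<d*k. cnj (P $$ (j*k + ?r, t)) * ?Z i j * P $$ (i*k + ?c, t)) = ?Z i j * P $$ (i*k + ?c, j*k + ?r)" .
  qed
  also have "\<dots> = amplify d k n (PhiP d k P) Z $$ (r,c)"
    using amp_entry[OF r c] by simp
  finally show ?thesis by simp
qed

lemma PhiP_pos: assumes Pc: "P \<in> carrier_mat (d*k) (d*k)" and Ph: "adj P = P" and Pi: "P * P = P"
  and Z: "Z \<in> carrier_mat (n*d) (n*d)" and pZ: "positive (n*d) Z"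
  shows "positive (n*k) (amplify d k n (PhiP d k P) Z)"
  unfolding positive_def
proof (intro conjI ballI)
  let ?A = "amplify d k n (PhiP d k P) Z"
  let ?M = "\<lambda>t. adj (Bm n d k P t) * Z * Bm n d k P t"
  show Ac: "?A \<in> carrier_mat (n*k) (n*k)" by (simp add: amplify_def)
  fix w :: "complex vec" assume w: "w \<in> carrier_vec (n*k)"
  have Mc: "\<And>t. ?M t \<in> carrier_mat (n*k) (n*k)"
    using Z by (meson Bm_carrier adj_carrier mult_carrier_mat)
  have val: "conjugate w \<bullet> (?M t *\<^sub>v w) = conjugate (Bm n d k P t *\<^sub>v w) \<bullet> (Z *\<^sub>v (Bm n d k P t *\<^sub>v w))" for t
  proof -
    have B: "Bm n d k P t \<in> carrier_mat (n*d) (n*k)" by simp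
    have aB: "adj (Bm n d k P t) \<in> carrier_mat (n*k) (n*d)" by simp
    have aBZ: "adj (Bm n d k P t) * Z \<in> carrier_mat (n*k) (n*d)" using mult_carrier_mat[OF aB Z] .
    have Bw: "Bm n d k P t *\<^sub>v w \<in> carrier_vec (n*d)" using mult_mat_vec_carrier[OF B w] .
    have "?M t *\<^sub>v w = (adj (Bm n d k P t) * Z) *\<^sub>v (Bm n d k P t *\<^sub>v w)"
      by (rule assoc_mult_mat_vec[OF aBZ B w])
    also have "\<dots> = adj (Bm n d k P t) *\<^sub>v (Z *\<^sub>v (Bm n d k P t *\<^sub>v w))"
      by (rule assoc_mult_mat_vec[OF aB Z Bw])
    finally have "?M t *\<^sub>v w = adj (Bm n d k P t) *\<^sub>v (Z *\<^sub>v (Bm n d k P t *\<^sub>v w))" .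
    then show ?thesis using quad_adj[OF B mult_mat_vec_carrier[OF Z Bw] w] by simp
  qed
  have pos_t: "Im (conjugate w \<bullet> (?M t *\<^sub>v w)) = 0 \<and> 0 \<le> Re (conjugate w \<bullet> (?M t *\<^sub>v w))" for t
  proof -
    have "Bm n d k P t *\<^sub>v w \<in> carrier_vec (n*d)" using mult_mat_vec_carrier[OF Bm_carrier w] .
    then show ?thesis unfolding val using pZ unfolding positive_def Let_def by blast
  qed
  have "conjugate w \<bullet> (?A *\<^sub>v w) = quad (n*k) ?A w" by (rule quad_eq[OF Ac w])
  also have "\<dots> = (\<Sum>t<d*k. quad (n*k) (?M t) w)"
    by (rule quad_sum) (use amp_sum[OF Pc Ph Pi Z] in auto)
  also have "\<dots> = (\<Sum>t<d*k. conjugate w \<bullet> (?M t *\<^sub>v w))"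
    by (rule sum.cong[OF refl]) (rule quad_eq[OF Mc w, symmetric])
  finally have e: "conjugate w \<bullet> (?A *\<^sub>v w) = (\<Sum>t<d*k. conjugate w \<bullet> (?M t *\<^sub>v w))" .
  show "let z = conjugate w \<bullet> (?A *\<^sub>v w) in Im z = 0 \<and> 0 \<le> Re z"
    unfolding Let_def e Im_sum Re_sum using pos_t by (auto intro: sum_nonneg)
qed

lemma PhiP_add: assumes X: "X \<in> carrier_mat d d" and Y: "Y \<in> carrier_mat d d"
  shows "PhiP d k P (X + Y) = PhiP d k P X + PhiP d k P Y"
proof (rule eq_matI)
  fix p q assume "p < dim_row (PhiP d k P X + PhiP d k P Y)" "q < dim_col (PhiP d k P X + PhiP d k P Y)"
  then have p: "p < k" and q: "q < k" by auto
  have "PhiP d k P (X + Y) $$ (p,q) = (\<Sum>i<d. \<Sum>j<d. (X $$ (j,i) + Y $$ (j,i)) * P $$ (i*k+q, j*k+p))"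
    unfolding PhiP_def using p q X Y by (intro trans[OF index_mat(1)] sum.cong refl) auto
  also have "\<dots> = (\<Sum>i<d. \<Sum>j<d. X $$ (j,i) * P $$ (i*k+q, j*k+p)) + (\<Sum>i<d. \<Sum>j<d. Y $$ (j,i) * P $$ (i*k+q, j*k+p))"
    by (simp add: distrib_right sum.distrib)
  also have "\<dots> = (PhiP d k P X + PhiP d k P Y) $$ (p,q)" using p q by (simp add: PhiP_def)
  finally show "PhiP d k P (X + Y) $$ (p,q) = (PhiP d k P X + PhiP d k P Y) $$ (p,q)" .
qed auto

lemma PhiP_smult: assumes X: "X \<in> carrier_mat d d"
  shows "PhiP d k P (a \<cdot>\<^sub>m X) = a \<cdot>\<^sub>m PhiP d k P X"
proof (rule eq_matI)
  fix p q assume "p < dim_row (a \<cdot>\<^sub>m PhiP d k P X)" "q < dim_col (a \<cdot>\<^sub>m PhiP d k P X)"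
  then have p: "p < k" and q: "q < k" by auto
  have "PhiP d k P (a \<cdot>\<^sub>m X) $$ (p,q) = (\<Sum>i<d. \<Sum>j<d. (a * X $$ (j,i)) * P $$ (i*k+q, j*k+p))"
    unfolding PhiP_def using p q X by (intro trans[OF index_mat(1)] sum.cong refl) auto
  also have "\<dots> = a * (\<Sum>i<d. \<Sum>j<d. X $$ (j,i) * P $$ (i*k+q, j*k+p))"
    by (simp add: sum_distrib_left mult.assoc)
  also have "\<dots> = (a \<cdot>\<^sub>m PhiP d k P X) $$ (p,q)" using p q by (simp add: PhiP_def)
  finally show "PhiP d k P (a \<cdot>\<^sub>m X) $$ (p,q) = (a \<cdot>\<^sub>m PhiP d k P X) $$ (p,q)" .
qed auto

lemma PhiP_blockalg: assumes Pbd: "bd ms (tdim ns) (tdim ns) P"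
  shows "PhiP (tdim ns) (tdim ms) P X \<in> blockalg ms"
  unfolding blockalg_def
proof (intro CollectI conjI allI impI)
  let ?d = "tdim ns" and ?k = "tdim ms"
  show "PhiP ?d ?k P X \<in> carrier_mat ?k ?k" by simp
  fix p q assume p: "p < ?k" and q: "q < ?k" and b: "blk ms p \<noteq> blk ms q"
  have "PhiP ?d ?k P X $$ (p,q) = (\<Sum>i<?d. \<Sum>j<?d. X $$ (j,i) * P $$ (i*?k+q, j*?k+p))"
    using p q by (simp add: PhiP_def)
  also have "\<dots> = 0"
  proof (intro sum.neutral ballI)
    fix i j assume "i \<in> {..<?d}" "j \<in> {..<?d}"
    then have i: "i*?k+q < ?d*?k" and j: "j*?k+p < ?d*?k" using idx_comb p q by auto
    have "(i*?k+q) mod ?k = q" "(j*?k+p) mod ?k = p" using p q by auto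
    then have "P $$ (i*?k+q, j*?k+p) = 0" using Pbd i j b unfolding bd_def by auto
    then show "X $$ (j,i) * P $$ (i*?k+q, j*?k+p) = 0" by simp
  qed
  finally show "PhiP ?d ?k P X $$ (p,q) = 0" .
qed

theorem theorem5p7:
  fixes ns ms :: "nat list" and V :: "complex mat set"
  assumes "qmr ns ms V"
    and "symmetric_qmr V"
    and "decomposable ns ms V"
  shows "\<exists>Phi. cp_map ns ms Phi \<and> tildeS ns ms Phi = V"
proof -
  let ?d = "tdim ns" and ?k = "tdim ms"
  obtain P where Pbd: "bd ms ?d ?d P" and Ph: "adj P = P" and Pi: "P * P = P"
    and VR: "V = {X. bd ms ?d ?d X \<and> P * X * P = X}"
    using V_corner[OF assms] by blast
  have Pc: "P \<in> carrier_mat (?d * ?k) (?d * ?k)" using Pbd by (simp add: bd_def)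
  let ?Phi = "PhiP ?d ?k P"
  have C: "CPhi ns ms ?Phi = P"
    by (rule CPhi_eq[OF Pc]) (rule P_offblock[OF assms(1) VR Pbd Pi])
  have cp: "cp_map ns ms ?Phi"
    unfolding cp_map_def Let_def
  proof (intro conjI ballI allI impI)
    fix X assume "X \<in> blockalg ns"
    show "?Phi X \<in> blockalg ms" by (rule PhiP_blockalg[OF Pbd])
  next
    fix X Y assume "X \<in> blockalg ns" "Y \<in> blockalg ns"
    then show "?Phi (X + Y) = ?Phi X + ?Phi Y" by (intro PhiP_add) (auto simp: blockalg_def)
  next
    fix X and a :: complex assume "X \<in> blockalg ns"
    then show "?Phi (a \<cdot>\<^sub>m X) = a \<cdot>\<^sub>m ?Phi X" by (intro PhiP_smult) (auto simp: blockalg_def)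
  next
    fix n Z assume "Z \<in> carrier_mat (n * ?d) (n * ?d) \<and> (\<forall>s<n. \<forall>t<n. subblock ?d Z s t \<in> blockalg ns) \<and> positive (n * ?d) Z"
    then show "positive (n * ?k) (amplify ?d ?k n ?Phi Z)"
      using PhiP_pos[OF Pc Ph Pi] by blast
  qed
  have "tildeS ns ms ?Phi = V"
    unfolding VR by (rule tildeS_eq[OF Pbd Ph Pi C])
  then show ?thesis using cp by blast
qed

end
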